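(* Let $1\le p\le\infty$ and $E=\mathcal{L}^p(I)$. If $(f_m)$ is a Schauder basis of $E$, then $(f_m*_T0)$ is a Schauder sequence in $E$.
   Context: Let $N\ge 2$, $I=[x_0,x_N]$, $\Delta: x_0<\dots<x_N$ a partition, $L_n(x)=a_nx+b_n$ affine with $L_n(x_0)=x_{n-1}$, $L_n(x_N)=x_n$, $I_1=[x_0,x_1]$, $I_n=(x_{n-1},x_n]$ for $n\ge2$, and $\alpha=(\alpha_1,\dots,\alpha_N)\in(\mathcal{L}^\infty(I))^N$ with $\Lambda:=\operatorname{ess\,sup}\{|\alpha_n(x)|:x\in I,n=1,\dots,N\}<1$. For $f,b\in E$, $f*_Tb$ is the unique fixed point in $E$ of the contraction $Tg(x):=f(x)+\alpha_n(L_n^{-1}(x))(g-b)(L_n^{-1}(x))$, $x\in I_n$; $0$ is the null function. A Schauder sequence is a sequence that is a Schauder basis of its closed linear span. *)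

theory Defs
  imports "HOL-Analysis.Analysis" "HOL-Probability.Essential_Supremum"
begin

definition Ival :: "(nat \<Rightarrow> real) \<Rightarrow> nat \<Rightarrow> real set" where
  "Ival xs N = {xs 0 .. xs N}"

definition partition :: "(nat \<Rightarrow> real) \<Rightarrow> nat \<Rightarrow> bool" where
  "partition xs N \<longleftrightarrow> (\<forall>n<N. xs n < xs (Suc n))"

definition subI :: "(nat \<Rightarrow> real) \<Rightarrow> nat \<Rightarrow> real set" where
  "subI xs n = (if n = 1 then {xs 0 .. xs 1} else {xs (n - 1) <.. xs n})"

(* L_n affine with L_n(x_0) = x_{n-1}, L_n(x_N) = x_n *)
definition Lmap :: "(nat \<Rightarrow> real) \<Rightarrow> nat \<Rightarrow> nat \<Rightarrow> real \<Rightarrow> real" where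
  "Lmap xs N n t = xs (n - 1) + (xs n - xs (n - 1)) / (xs N - xs 0) * (t - xs 0)"

definition Linv :: "(nat \<Rightarrow> real) \<Rightarrow> nat \<Rightarrow> nat \<Rightarrow> real \<Rightarrow> real" where
  "Linv xs N n y = xs 0 + (xs N - xs 0) / (xs n - xs (n - 1)) * (y - xs (n - 1))"

abbreviation lebI :: "(nat \<Rightarrow> real) \<Rightarrow> nat \<Rightarrow> real measure" where
  "lebI xs N \<equiv> lebesgue_on (Ival xs N)"

(* L^p(I), 1 \<le> p \<le> \<infinity>, as a set of (representatives of) functions *)
definition Lp :: "ereal \<Rightarrow> (nat \<Rightarrow> real) \<Rightarrow> nat \<Rightarrow> (real \<Rightarrow> real) set" where
  "Lp p xs N = {f. f \<in> borel_measurable (lebI xs N) \<and>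
      (if p = \<infinity> then esssup (lebI xs N) (\<lambda>x. ereal \<bar>f x\<bar>) < \<infinity>
       else integrable (lebI xs N) (\<lambda>x. \<bar>f x\<bar> powr real_of_ereal p))}"

definition Lp_norm :: "ereal \<Rightarrow> (nat \<Rightarrow> real) \<Rightarrow> nat \<Rightarrow> (real \<Rightarrow> real) \<Rightarrow> real" where
  "Lp_norm p xs N f = (if p = \<infinity> then real_of_ereal (esssup (lebI xs N) (\<lambda>x. ereal \<bar>f x\<bar>))
      else (integral\<^sup>L (lebI xs N) (\<lambda>x. \<bar>f x\<bar> powr real_of_ereal p)) powr (1 / real_of_ereal p))"

definition fractal_T :: "(nat \<Rightarrow> real) \<Rightarrow> nat \<Rightarrow> (nat \<Rightarrow> real \<Rightarrow> real) \<Rightarrow>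
    (real \<Rightarrow> real) \<Rightarrow> (real \<Rightarrow> real) \<Rightarrow> (real \<Rightarrow> real) \<Rightarrow> real \<Rightarrow> real" where
  "fractal_T xs N \<alpha> f b g x = f x + (\<Sum>n\<in>{1..N}. indicator (subI xs n) x *
      (\<alpha> n (Linv xs N n x) * (g (Linv xs N n x) - b (Linv xs N n x))))"

(* f *_T b : the (a.e. unique) fixed point of T in E = L^p(I) *)
definition fractal_fun :: "ereal \<Rightarrow> (nat \<Rightarrow> real) \<Rightarrow> nat \<Rightarrow> (nat \<Rightarrow> real \<Rightarrow> real) \<Rightarrow>
    (real \<Rightarrow> real) \<Rightarrow> (real \<Rightarrow> real) \<Rightarrow> (real \<Rightarrow> real)" where
  "fractal_fun p xs N \<alpha> f b = (SOME g. g \<in> Lp p xs N \<and>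
      Lp_norm p xs N (\<lambda>x. fractal_T xs N \<alpha> f b g x - g x) = 0)"

definition schauder_basis_of :: "ereal \<Rightarrow> (nat \<Rightarrow> real) \<Rightarrow> nat \<Rightarrow> (real \<Rightarrow> real) set \<Rightarrow>
    (nat \<Rightarrow> real \<Rightarrow> real) \<Rightarrow> bool" where
  "schauder_basis_of p xs N X e \<longleftrightarrow> (\<forall>m. e m \<in> X) \<and>
     (\<forall>f\<in>X. \<exists>!c :: nat \<Rightarrow> real.
        (\<lambda>k. Lp_norm p xs N (\<lambda>x. f x - (\<Sum>m<k. c m * e m x))) \<longlonglongrightarrow> 0)"

definition closed_span :: "ereal \<Rightarrow> (nat \<Rightarrow> real) \<Rightarrow> nat \<Rightarrow> (nat \<Rightarrow> real \<Rightarrow> real) \<Rightarrow> (real \<Rightarrow> real) set" where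
  "closed_span p xs N e = {g \<in> Lp p xs N. \<forall>\<epsilon>>0. \<exists>k (c :: nat \<Rightarrow> real).
      Lp_norm p xs N (\<lambda>x. g x - (\<Sum>m<k. c m * e m x)) < \<epsilon>}"

definition schauder_sequence :: "ereal \<Rightarrow> (nat \<Rightarrow> real) \<Rightarrow> nat \<Rightarrow> (nat \<Rightarrow> real \<Rightarrow> real) \<Rightarrow> bool" where
  "schauder_sequence p xs N e \<longleftrightarrow> schauder_basis_of p xs N (closed_span p xs N e) e"

end

theory Submission
  imports Defs
begin


lemma partition_mono:
  assumes "partition xs N" "i < j" "j \<le> N"
  shows "xs i < xs j"
  using assms(2,3)
proof (induction j)
  case 0 then show ?case by simp
next
  case (Suc j)
  have s: "xs j < xs (Suc j)" using assms(1) Suc.prems by (simp add: partition_def)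
  show ?case
  proof (cases "i = j")
    case True then show ?thesis using s by simp
  next
    case False then have "xs i < xs j" using Suc by simp
    then show ?thesis using s by simp
  qed
qed

lemma partition_mono_le:
  assumes "partition xs N" "i \<le> j" "j \<le> N"
  shows "xs i \<le> xs j"
  using partition_mono[OF assms(1)] assms(2,3) by (cases "i = j") (auto intro: less_imp_le)

locale part =
  fixes xs :: "nat \<Rightarrow> real" and N :: nat
  assumes N2: "N \<ge> 2" and part: "partition xs N"
begin

abbreviation "I \<equiv> Ival xs N"

lemma mono: "i < j \<Longrightarrow> j \<le> N \<Longrightarrow> xs i < xs j"
  using partition_mono[OF part] by blast

lemma mono_le: "i \<le> j \<Longrightarrow> j \<le> N \<Longrightarrow> xs i \<le> xs j"
  using partition_mono_le[OF part] by blast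

lemma Lpos: "xs 0 < xs N"
  using mono[of 0 N] N2 by simp

lemma hpos: "n \<in> {1..N} \<Longrightarrow> xs (n - 1) < xs n"
  using mono[of "n-1" n] by auto

lemma subI_sub: "n \<in> {1..N} \<Longrightarrow> subI xs n \<subseteq> {xs (n-1) .. xs n}"
  by (auto simp: subI_def)

lemma subI_I: "n \<in> {1..N} \<Longrightarrow> subI xs n \<subseteq> I"
proof -
  assume n: "n \<in> {1..N}"
  have "xs 0 \<le> xs (n-1)" "xs n \<le> xs N" using n mono_le by auto
  then show ?thesis using subI_sub[OF n] by (auto simp: Ival_def)
qed

lemma subI_disj:
  assumes n: "n \<in> {1..N}" and m: "m \<in> {1..N}" and nm: "n \<noteq> m"
  shows "subI xs n \<inter> subI xs m = {}"
proof -
  have *: "subI xs n \<inter> subI xs m = {}" if "n < m" "n \<in> {1..N}" "m \<in> {1..N}" for n m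
  proof -
    have "xs n \<le> xs (m - 1)" using that mono_le by auto
    moreover have "m \<noteq> 1" using that by auto
    ultimately show ?thesis using subI_sub[OF that(2)] by (auto simp: subI_def)
  qed
  show ?thesis
  proof (cases "n < m")
    case True then show ?thesis using * n m by blast
  next
    case False then have "m < n" using nm by simp
    then show ?thesis using * n m by blast
  qed
qed

lemma subI_cover:
  assumes x: "x \<in> I"
  shows "\<exists>n\<in>{1..N}. x \<in> subI xs n"
proof (cases "x \<le> xs 1")
  case True then show ?thesis using x N2 by (intro bexI[of _ 1]) (auto simp: subI_def Ival_def)
next
  case False
  define n where "n = (LEAST n. x \<le> xs n)"
  have xN: "x \<le> xs N" using x by (auto simp: Ival_def)
  have nx: "x \<le> xs n" unfolding n_def using xN by (rule LeastI)
  have nN: "n \<le> N" unfolding n_def using xN by (rule Least_le)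
  have x0: "xs 0 \<le> x" using x by (auto simp: Ival_def)
  have m01: "xs 0 < xs 1" using mono[of 0 1] N2 by simp
  have n1: "n \<noteq> 0" "n \<noteq> 1"
  proof -
    show "n \<noteq> 0" proof assume "n = 0" then show False using nx False x0 m01 by simp qed
    show "n \<noteq> 1" proof assume "n = 1" then show False using nx False by simp qed
  qed
  have "\<not> x \<le> xs (n - 1)" unfolding n_def
    by (rule not_less_Least) (use n1 in \<open>auto simp: n_def\<close>)
  then show ?thesis using n1 nN nx by (intro bexI[of _ n]) (auto simp: subI_def)
qed

lemma subI_unique:
  "x \<in> I \<Longrightarrow> \<exists>!n. n \<in> {1..N} \<and> x \<in> subI xs n"
  using subI_cover subI_disj by blast

lemma Linv_in:
  assumes n: "n \<in> {1..N}" and x: "x \<in> {xs (n-1) .. xs n}"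
  shows "Linv xs N n x \<in> I"
proof -
  have h: "xs (n - 1) < xs n" using hpos n .
  have L: "xs 0 < xs N" using Lpos .
  define c where "c = (xs N - xs 0) / (xs n - xs (n - 1))"
  have c0: "c > 0" using h L by (simp add: c_def)
  have "0 \<le> x - xs (n-1)" "x - xs (n-1) \<le> xs n - xs (n-1)" using x by auto
  then have "0 \<le> c * (x - xs (n-1))" "c * (x - xs (n-1)) \<le> c * (xs n - xs (n-1))"
    using c0 by (auto intro: mult_left_mono)
  moreover have "c * (xs n - xs (n-1)) = xs N - xs 0" using h by (simp add: c_def)
  ultimately show ?thesis by (auto simp: Linv_def Ival_def c_def)
qed

lemma Linv_in': "n \<in> {1..N} \<Longrightarrow> x \<in> subI xs n \<Longrightarrow> Linv xs N n x \<in> I"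
  using Linv_in subI_sub by blast

lemma Linv_affine: "Linv xs N n x = (xs 0 - (xs N - xs 0) / (xs n - xs (n - 1)) * xs (n-1))
   + (xs N - xs 0) / (xs n - xs (n - 1)) * x"
proof -
  have *: "\<And>a c x d::real. a + c*(x - d) = (a - c*d) + c*x" by algebra
  show ?thesis unfolding Linv_def by (rule *)
qed

lemma I_sets: "I \<in> sets lebesgue"
  by (simp add: Ival_def)

lemma emeasure_I: "emeasure lebesgue I = ennreal (xs N - xs 0)"
  using Lpos by (simp add: Ival_def)

lemma sum_h_gen: "(\<Sum>n\<in>{1..M}. xs n - xs (n - 1)) = xs M - xs 0"
  by (induction M) (auto simp: sum.atLeast_Suc_atMost)

lemma sum_h: "(\<Sum>n\<in>{1..N}. xs n - xs (n - 1)) = xs N - xs 0"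
  by (rule sum_h_gen)

end



lemma sum_single_nz:
  assumes "finite A" "n \<in> A" "\<And>i. i \<in> A \<Longrightarrow> i \<noteq> n \<Longrightarrow> f i = 0"
  shows "sum f A = f n"
proof -
  have "sum f A = f n + sum f (A - {n})" using assms(1,2) by (rule sum.remove)
  also have "sum f (A - {n}) = 0" using assms(3) by (intro sum.neutral) auto
  finally show ?thesis by simp
qed

context part
begin

definition Aop :: "(nat \<Rightarrow> real \<Rightarrow> real) \<Rightarrow> (real \<Rightarrow> real) \<Rightarrow> real \<Rightarrow> real" where
  "Aop \<alpha> g x = (\<Sum>n\<in>{1..N}. indicator (subI xs n) x * (\<alpha> n (Linv xs N n x) * g (Linv xs N n x)))"

lemma Aop_single:
  assumes n: "n \<in> {1..N}" and x: "x \<in> subI xs n"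
  shows "Aop \<alpha> g x = \<alpha> n (Linv xs N n x) * g (Linv xs N n x)"
proof -
  have "Aop \<alpha> g x = indicator (subI xs n) x * (\<alpha> n (Linv xs N n x) * g (Linv xs N n x))"
    unfolding Aop_def
    by (rule sum_single_nz) (use subI_disj[OF n] x n in \<open>auto simp: indicator_def\<close>)
  then show ?thesis using x by simp
qed

lemma Aop_out: "x \<notin> I \<Longrightarrow> Aop \<alpha> g x = 0"
proof -
  assume x: "x \<notin> I"
  then have "\<forall>n\<in>{1..N}. x \<notin> subI xs n" using subI_I by blast
  then show ?thesis unfolding Aop_def by (auto intro!: sum.neutral)
qed

lemma Aop_phi:
  assumes phi0: "\<phi> 0 = 0" and phinn: "\<And>t. \<phi> t \<ge> 0"
  shows "ennreal (\<phi> (Aop \<alpha> g x)) = (\<Sum>n\<in>{1..N}. indicator (subI xs n) x *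
     ennreal (\<phi> (\<alpha> n (Linv xs N n x) * g (Linv xs N n x))))"
proof (cases "x \<in> I")
  case True
  then obtain n where n: "n \<in> {1..N}" "x \<in> subI xs n" using subI_cover by blast
  have "(\<Sum>n\<in>{1..N}. indicator (subI xs n) x * ennreal (\<phi> (\<alpha> n (Linv xs N n x) * g (Linv xs N n x))))
     = indicator (subI xs n) x * ennreal (\<phi> (\<alpha> n (Linv xs N n x) * g (Linv xs N n x)))"
    by (rule sum_single_nz) (use subI_disj[OF n(1)] n in \<open>auto simp: indicator_def\<close>)
  then show ?thesis using Aop_single[OF n] n by simp
next
  case False
  then have "\<And>n. n \<in> {1..N} \<Longrightarrow> x \<notin> subI xs n" using subI_I by blast
  then show ?thesis using False Aop_out[OF False] phi0 by (auto simp: indicator_def intro!: sum.neutral)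
qed

lemma subI_lebesgue: "subI xs n \<in> sets lebesgue"
proof -
  have "subI xs n \<in> sets borel" by (simp add: subI_def)
  then show ?thesis by (simp add: sets_completionI_sets)
qed

lemma Linv_in_iff:
  assumes n: "n \<in> {1..N}"
  shows "Linv xs N n x \<in> I \<longleftrightarrow> x \<in> {xs (n-1) .. xs n}"
proof -
  have h: "xs (n - 1) < xs n" using hpos n .
  have L: "xs 0 < xs N" using Lpos .
  define c where "c = (xs N - xs 0) / (xs n - xs (n - 1))"
  have c0: "c > 0" using h L by (simp add: c_def)
  have cc: "c * (xs n - xs (n-1)) = xs N - xs 0" using h by (simp add: c_def)
  have "Linv xs N n x \<in> I \<longleftrightarrow> 0 \<le> c * (x - xs (n-1)) \<and> c * (x - xs (n-1)) \<le> c * (xs n - xs (n-1))"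
    using cc by (auto simp: Linv_def Ival_def c_def)
  also have "\<dots> \<longleftrightarrow> 0 \<le> x - xs (n-1) \<and> x - xs (n-1) \<le> xs n - xs (n-1)"
    using c0 by (simp add: zero_le_mult_iff)
  finally show ?thesis by auto
qed

lemma comp_meas:
  fixes G :: "real \<Rightarrow> real"
  assumes n: "n \<in> {1..N}" and G: "G \<in> borel_measurable lebesgue"
  shows "(\<lambda>x. G (Linv xs N n x)) \<in> borel_measurable lebesgue"
proof -
  have c: "(xs N - xs 0) / (xs n - xs (n - 1)) \<noteq> 0" using hpos[OF n] Lpos by simp
  show ?thesis unfolding Linv_affine
    using borel_measurable_affine[OF G c, of "xs 0 - (xs N - xs 0) / (xs n - xs (n - 1)) * xs (n - 1)"] by simp
qed

lemma comp_meas_ennreal: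
  assumes n: "n \<in> {1..N}" and G: "G \<in> borel_measurable lebesgue"
  shows "(\<lambda>x. (G (Linv xs N n x) :: ennreal)) \<in> borel_measurable lebesgue"
proof -
  have "(\<lambda>x. enn2real (G x)) \<in> borel_measurable lebesgue" using G by measurable
  then have "(\<lambda>x. enn2real (G (Linv xs N n x))) \<in> borel_measurable lebesgue" by (rule comp_meas[OF n])
  moreover have "G -` {top} \<inter> space lebesgue \<in> sets lebesgue"
    by (rule measurable_sets[OF G]) simp
  then have "{x. G x = top} \<in> sets lebesgue" by (simp add: vimage_def)
  then have "(\<lambda>x. indicator {x. G x = top} x :: real) \<in> borel_measurable lebesgue" by simp
  then have "(\<lambda>x. indicator {x. G x = top} (Linv xs N n x) :: real) \<in> borel_measurable lebesgue"
    by (rule comp_meas[OF n])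
  ultimately have "(\<lambda>x. if indicator {x. G x = top} (Linv xs N n x) = (1::real) then top
        else ennreal (enn2real (G (Linv xs N n x)))) \<in> borel_measurable lebesgue"
    by measurable
  moreover have "(\<lambda>x. if indicator {x. G x = top} (Linv xs N n x) = (1::real) then top
        else ennreal (enn2real (G (Linv xs N n x)))) = (\<lambda>x. G (Linv xs N n x))"
    by (auto simp: indicator_def fun_eq_iff less_top)
  ultimately show ?thesis by simp
qed

lemma term_meas:
  assumes n: "n \<in> {1..N}" and G: "(\<lambda>y. G y :: real) \<in> borel_measurable (lebesgue_on I)"
  shows "(\<lambda>x. indicator (subI xs n) x * G (Linv xs N n x)) \<in> borel_measurable lebesgue"
proof -
  have G': "(\<lambda>y. if y \<in> I then G y else 0) \<in> borel_measurable lebesgue"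
    by (rule borel_measurable_if_I[OF G I_sets])
  have "(\<lambda>x. indicator (subI xs n) x * (\<lambda>y. if y \<in> I then G y else 0) (Linv xs N n x)) \<in> borel_measurable lebesgue"
  proof (intro borel_measurable_times)
    show "(\<lambda>x. indicator (subI xs n) x :: real) \<in> borel_measurable lebesgue"
      by (rule borel_measurable_indicator[OF subI_lebesgue])
    show "(\<lambda>x. (\<lambda>y. if y \<in> I then G y else 0) (Linv xs N n x)) \<in> borel_measurable lebesgue"
      using comp_meas[OF n G'] by simp
  qed
  moreover have "(\<lambda>x. indicator (subI xs n) x * (\<lambda>y. if y \<in> I then G y else 0) (Linv xs N n x))
     = (\<lambda>x. indicator (subI xs n) x * G (Linv xs N n x))"
    using Linv_in'[OF n] by (auto simp: indicator_def fun_eq_iff)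
  ultimately show ?thesis by simp
qed

lemma Aop_meas:
  assumes am: "\<forall>n\<in>{1..N}. \<alpha> n \<in> borel_measurable (lebesgue_on I)"
    and g: "g \<in> borel_measurable (lebesgue_on I)"
  shows "Aop \<alpha> g \<in> borel_measurable (lebesgue_on I)"
proof -
  have "(\<lambda>x. \<Sum>n\<in>{1..N}. indicator (subI xs n) x * (\<alpha> n (Linv xs N n x) * g (Linv xs N n x)))
        \<in> borel_measurable lebesgue"
  proof (rule borel_measurable_sum)
    fix n assume n: "n \<in> {1..N}"
    have an: "\<alpha> n \<in> borel_measurable (lebesgue_on I)" using am n by blast
    have "(\<lambda>y. \<alpha> n y * g y) \<in> borel_measurable (lebesgue_on I)" using an g by measurable
    then show "(\<lambda>x. indicator (subI xs n) x * (\<alpha> n (Linv xs N n x) * g (Linv xs N n x))) \<in> borel_measurable lebesgue"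
      using term_meas[OF n, of "\<lambda>y. \<alpha> n y * g y"] by simp
  qed
  then have "Aop \<alpha> g \<in> borel_measurable lebesgue" unfolding Aop_def[abs_def] .
  then show ?thesis by (rule measurable_restrict_space1)
qed

lemma AE_lebesgue_neq: "AE x in lebesgue. x \<noteq> (c::real)"
  using AE_completion[OF AE_lborel_singleton[of c]] by simp

lemma change_var:
  assumes n: "n \<in> {1..N}" and F: "F \<in> borel_measurable lebesgue"
    and F0: "\<And>y. y \<notin> I \<Longrightarrow> F y = 0"
  shows "(\<integral>\<^sup>+x. indicator (subI xs n) x * F (Linv xs N n x) \<partial>lebesgue)
       = ennreal ((xs n - xs (n-1)) / (xs N - xs 0)) * (\<integral>\<^sup>+y. F y \<partial>lebesgue)"
proof -
  define c where "c = (xs N - xs 0) / (xs n - xs (n - 1))"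
  define t where "t = xs 0 - c * xs (n-1)"
  have c0: "c > 0" using hpos[OF n] Lpos by (simp add: c_def)
  have Lt: "Linv xs N n x = t + c * x" for x unfolding Linv_affine t_def c_def by simp
  have eq1: "(\<integral>\<^sup>+y. F y \<partial>lebesgue) = ennreal c * (\<integral>\<^sup>+x. F (t + c * x) \<partial>lebesgue)"
    using nn_integral_real_affine_lebesgue[OF F, of c t] c0 by simp
  have eq2: "(\<integral>\<^sup>+x. indicator (subI xs n) x * F (Linv xs N n x) \<partial>lebesgue)
      = (\<integral>\<^sup>+x. F (t + c * x) \<partial>lebesgue)"
  proof (rule nn_integral_cong_AE)
    show "AE x in lebesgue. indicator (subI xs n) x * F (Linv xs N n x) = F (t + c * x)"
      using AE_lebesgue_neq[of "xs (n-1)"]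
    proof eventually_elim
      case (elim x)
      show ?case
      proof (cases "x \<in> subI xs n")
        case True then show ?thesis by (simp add: Lt)
      next
        case False
        then have "x \<notin> {xs (n-1) .. xs n}" using elim n by (auto simp: subI_def split: if_splits)
        then have "Linv xs N n x \<notin> I" using Linv_in_iff[OF n] by simp
        then show ?thesis using False F0 by (simp add: Lt)
      qed
    qed
  qed
  have "ennreal ((xs n - xs (n-1)) / (xs N - xs 0)) * ennreal c = 1"
    using hpos[OF n] Lpos by (simp add: c_def flip: ennreal_mult)
  then show ?thesis unfolding eq2 eq1
    by (metis mult.assoc mult_1)
qed

lemma AE_transfer:
  assumes n: "n \<in> {1..N}" and P: "AE y in lebesgue_on I. P y"
  shows "AE x in lebesgue_on I. x \<in> subI xs n \<longrightarrow> P (Linv xs N n x)"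
proof -
  from P obtain Z where Z: "{y \<in> space (lebesgue_on I). \<not> P y} \<subseteq> Z"
      "emeasure (lebesgue_on I) Z = 0" "Z \<in> sets (lebesgue_on I)"
    by (rule AE_E)
  have "Z \<in> null_sets (lebesgue_on I)" using Z by (simp add: null_setsI)
  then have Z': "Z \<subseteq> I" "Z \<in> null_sets lebesgue"
    using null_sets_restrict_space[OF I_sets] by auto
  have Zm: "(\<lambda>y. indicator Z y :: ennreal) \<in> borel_measurable lebesgue"
    using Z' by (auto simp: null_sets_def)
  have "(\<integral>\<^sup>+x. indicator (subI xs n) x * indicator Z (Linv xs N n x) \<partial>lebesgue)
       = ennreal ((xs n - xs (n-1)) / (xs N - xs 0)) * (\<integral>\<^sup>+y. indicator Z y \<partial>lebesgue)"
    by (rule change_var[OF n Zm]) (use Z' in \<open>auto simp: indicator_def\<close>)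
  also have "(\<integral>\<^sup>+y. indicator Z y \<partial>lebesgue) = 0"
    using Z' by (simp add: null_sets_def)
  finally have "(\<integral>\<^sup>+x. indicator (subI xs n) x * indicator Z (Linv xs N n x) \<partial>lebesgue) = 0" by simp
  moreover have "(\<lambda>x. indicator (subI xs n) x * (indicator Z (Linv xs N n x) :: ennreal)) \<in> borel_measurable lebesgue"
  proof -
    have i: "(indicator (subI xs n) :: real \<Rightarrow> ennreal) \<in> borel_measurable lebesgue"
      by (rule borel_measurable_indicator[OF subI_lebesgue])
    show ?thesis using i comp_meas_ennreal[OF n Zm] by measurable
  qed
  ultimately have "AE x in lebesgue. indicator (subI xs n) x * (indicator Z (Linv xs N n x) :: ennreal) = 0"
    by (simp add: nn_integral_0_iff_AE)
  then have "AE x in lebesgue. x \<in> I \<longrightarrow> x \<in> subI xs n \<longrightarrow> P (Linv xs N n x)"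
  proof eventually_elim
    case (elim x)
    show ?case
    proof (intro impI)
      assume "x \<in> I" "x \<in> subI xs n"
      then have "Linv xs N n x \<notin> Z" using elim by (auto simp: indicator_def)
      moreover have "Linv xs N n x \<in> I" using Linv_in'[OF n \<open>x \<in> subI xs n\<close>] .
      ultimately show "P (Linv xs N n x)" using Z(1) by auto
    qed
  qed
  then show ?thesis using I_sets by (subst AE_restrict_space_iff) auto
qed

end



context part
begin

lemma Aop_diff: "Aop \<alpha> (\<lambda>x. u x - v x) x = Aop \<alpha> u x - Aop \<alpha> v x"
  unfolding Aop_def by (simp add: algebra_simps sum_subtractf)

lemma Aop_add: "Aop \<alpha> (\<lambda>x. u x + v x) x = Aop \<alpha> u x + Aop \<alpha> v x"
  unfolding Aop_def by (simp add: algebra_simps sum.distrib)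

lemma Aop_cmult: "Aop \<alpha> (\<lambda>x. c * u x) x = c * Aop \<alpha> u x"
  unfolding Aop_def sum_distrib_left by (rule sum.cong[OF refl]) (simp add: ac_simps)

lemma Aop_sum: "Aop \<alpha> (\<lambda>x. \<Sum>j\<in>J. u j x) x = (\<Sum>j\<in>J. Aop \<alpha> (u j) x)"
  unfolding Aop_def by (simp add: sum_distrib_left sum_distrib_right sum.swap[of _ J] mult.assoc)

lemma Aop_zero: "Aop \<alpha> (\<lambda>x. 0) x = 0"
  unfolding Aop_def by simp

lemma nn_restrict: "(\<integral>\<^sup>+x. f x \<partial>lebesgue_on I) = (\<integral>\<^sup>+x. f x * indicator I x \<partial>lebesgue)"
  by (rule nn_integral_restrict_space) (simp add: I_sets)

end

locale setting = part +
  fixes \<alpha> :: "nat \<Rightarrow> real \<Rightarrow> real" and \<Lambda> :: real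
  assumes am: "\<forall>n\<in>{1..N}. \<alpha> n \<in> borel_measurable (lebesgue_on (Ival xs N))"
    and Lam1: "1/2 \<le> \<Lambda>" and Lam2: "\<Lambda> < 1"
    and ab: "\<forall>n\<in>{1..N}. AE x in lebesgue_on (Ival xs N). \<bar>\<alpha> n x\<bar> \<le> \<Lambda>"
begin

abbreviation "A \<equiv> Aop \<alpha>"

lemma A_meas: "g \<in> borel_measurable (lebesgue_on I) \<Longrightarrow> A g \<in> borel_measurable (lebesgue_on I)"
  using Aop_meas[OF am] by blast

lemma term_integral:
  assumes n: "n \<in> {1..N}" and G: "G \<in> borel_measurable (lebesgue_on I)"
  shows "(\<integral>\<^sup>+x. ennreal (indicator (subI xs n) x * G (Linv xs N n x)) \<partial>lebesgue_on I)
    = ennreal ((xs n - xs (n-1)) / (xs N - xs 0)) * (\<integral>\<^sup>+y. ennreal (G y) \<partial>lebesgue_on I)"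
proof -
  define F where "F y = ennreal (if y \<in> I then G y else 0)" for y
  have Fm: "F \<in> borel_measurable lebesgue"
    unfolding F_def using borel_measurable_if_I[OF G I_sets] by measurable
  have "(\<integral>\<^sup>+x. ennreal (indicator (subI xs n) x * G (Linv xs N n x)) \<partial>lebesgue_on I)
      = (\<integral>\<^sup>+x. indicator (subI xs n) x * F (Linv xs N n x) \<partial>lebesgue)"
    unfolding nn_restrict
    by (rule nn_integral_cong) (use Linv_in'[OF n] subI_I[OF n] in \<open>auto simp: F_def indicator_def\<close>)
  also have "\<dots> = ennreal ((xs n - xs (n-1)) / (xs N - xs 0)) * (\<integral>\<^sup>+y. F y \<partial>lebesgue)"
    by (rule change_var[OF n Fm]) (simp add: F_def)
  also have "(\<integral>\<^sup>+y. F y \<partial>lebesgue) = (\<integral>\<^sup>+y. ennreal (G y) \<partial>lebesgue_on I)"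
    unfolding nn_restrict by (rule nn_integral_cong) (auto simp: F_def indicator_def)
  finally show ?thesis .
qed

lemma NP_A:
  fixes p :: real
  assumes p: "p > 0" and g: "g \<in> borel_measurable (lebesgue_on I)"
  shows "(\<integral>\<^sup>+x. ennreal (\<bar>A g x\<bar> powr p) \<partial>lebesgue_on I)
      \<le> ennreal (\<Lambda> powr p) * (\<integral>\<^sup>+x. ennreal (\<bar>g x\<bar> powr p) \<partial>lebesgue_on I)"
proof -
  define G where "G n y = \<bar>\<alpha> n y * g y\<bar> powr p" for n y
  have Gm: "G n \<in> borel_measurable (lebesgue_on I)" if n: "n \<in> {1..N}" for n
  proof -
    have an: "\<alpha> n \<in> borel_measurable (lebesgue_on I)" using am n by blast
    show ?thesis unfolding G_def using an g by measurable
  qed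
  have eq: "ennreal (\<bar>A g x\<bar> powr p) = (\<Sum>n\<in>{1..N}. ennreal (indicator (subI xs n) x * G n (Linv xs N n x)))" for x
    using Aop_phi[of "\<lambda>t. \<bar>t\<bar> powr p" \<alpha> g x] by (simp add: G_def indicator_mult_ennreal)
  have "(\<integral>\<^sup>+x. ennreal (\<bar>A g x\<bar> powr p) \<partial>lebesgue_on I)
     = (\<Sum>n\<in>{1..N}. \<integral>\<^sup>+x. ennreal (indicator (subI xs n) x * G n (Linv xs N n x)) \<partial>lebesgue_on I)"
    unfolding eq
  proof (rule nn_integral_sum)
    fix n assume n: "n \<in> {1..N}"
    have "(\<lambda>x. indicator (subI xs n) x * G n (Linv xs N n x)) \<in> borel_measurable lebesgue"
      by (rule term_meas[OF n Gm[OF n]])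
    then have "(\<lambda>x. indicator (subI xs n) x * G n (Linv xs N n x)) \<in> borel_measurable (lebesgue_on I)"
      by (rule measurable_restrict_space1)
    then show "(\<lambda>x. ennreal (indicator (subI xs n) x * G n (Linv xs N n x))) \<in> borel_measurable (lebesgue_on I)"
      by measurable
  qed
  also have "\<dots> = (\<Sum>n\<in>{1..N}. ennreal ((xs n - xs (n-1)) / (xs N - xs 0)) * (\<integral>\<^sup>+y. ennreal (G n y) \<partial>lebesgue_on I))"
  proof (rule sum.cong[OF refl])
    fix n assume n: "n \<in> {1..N}"
    show "(\<integral>\<^sup>+x. ennreal (indicator (subI xs n) x * G n (Linv xs N n x)) \<partial>lebesgue_on I) =
      ennreal ((xs n - xs (n-1)) / (xs N - xs 0)) * (\<integral>\<^sup>+y. ennreal (G n y) \<partial>lebesgue_on I)"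
      by (rule term_integral[OF n Gm[OF n]])
  qed
  also have "\<dots> \<le> (\<Sum>n\<in>{1..N}. ennreal ((xs n - xs (n-1)) / (xs N - xs 0)) *
        (ennreal (\<Lambda> powr p) * (\<integral>\<^sup>+x. ennreal (\<bar>g x\<bar> powr p) \<partial>lebesgue_on I)))"
  proof (rule sum_mono, rule mult_left_mono)
    fix n assume n: "n \<in> {1..N}"
    have "(\<integral>\<^sup>+y. ennreal (G n y) \<partial>lebesgue_on I) \<le> (\<integral>\<^sup>+y. ennreal (\<Lambda> powr p) * ennreal (\<bar>g y\<bar> powr p) \<partial>lebesgue_on I)"
    proof (rule nn_integral_mono_AE)
      show "AE y in lebesgue_on I. ennreal (G n y) \<le> ennreal (\<Lambda> powr p) * ennreal (\<bar>g y\<bar> powr p)"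
        using ab n
      proof -
        have "AE y in lebesgue_on I. \<bar>\<alpha> n y\<bar> \<le> \<Lambda>" using ab n by blast
        then show ?thesis
        proof eventually_elim
          case (elim y)
          have "G n y = \<bar>\<alpha> n y\<bar> powr p * \<bar>g y\<bar> powr p" by (simp add: G_def abs_mult powr_mult)
          also have "\<dots> \<le> \<Lambda> powr p * \<bar>g y\<bar> powr p"
            using elim p by (intro mult_right_mono powr_mono2) auto
          finally show ?case by (simp add: ennreal_mult[symmetric])
        qed
      qed
    qed
    also have "\<dots> = ennreal (\<Lambda> powr p) * (\<integral>\<^sup>+x. ennreal (\<bar>g x\<bar> powr p) \<partial>lebesgue_on I)"
      by (rule nn_integral_cmult) (use g in measurable)
    finally show "(\<integral>\<^sup>+y. ennreal (G n y) \<partial>lebesgue_on I) \<le> \<dots>" .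
  qed simp
  also have "\<dots> = (\<Sum>n\<in>{1..N}. ennreal ((xs n - xs (n-1)) / (xs N - xs 0))) *
        (ennreal (\<Lambda> powr p) * (\<integral>\<^sup>+x. ennreal (\<bar>g x\<bar> powr p) \<partial>lebesgue_on I))"
    by (simp add: sum_distrib_right)
  also have "(\<Sum>n\<in>{1..N}. ennreal ((xs n - xs (n-1)) / (xs N - xs 0))) = 1"
  proof -
    have "(\<Sum>n\<in>{1..N}. ennreal ((xs n - xs (n-1)) / (xs N - xs 0)))
        = ennreal (\<Sum>n\<in>{1..N}. (xs n - xs (n-1)) / (xs N - xs 0))"
      using hpos Lpos by (intro sum_ennreal) (auto intro!: divide_nonneg_pos less_imp_le)
    also have "(\<Sum>n\<in>{1..N}. (xs n - xs (n-1)) / (xs N - xs 0)) = 1"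
      using sum_h Lpos by (simp add: sum_divide_distrib[symmetric])
    finally show ?thesis by simp
  qed
  finally show ?thesis by simp
qed

lemma A_AE_bound:
  assumes g: "AE y in lebesgue_on I. \<bar>g y\<bar> \<le> M" and M: "M \<ge> 0"
  shows "AE x in lebesgue_on I. \<bar>A g x\<bar> \<le> \<Lambda> * M"
proof -
  have "AE x in lebesgue_on I. \<forall>n\<in>{1..N}. x \<in> subI xs n \<longrightarrow>
      (\<bar>\<alpha> n (Linv xs N n x)\<bar> \<le> \<Lambda> \<and> \<bar>g (Linv xs N n x)\<bar> \<le> M)"
  proof (rule AE_finite_allI, simp, rule AE_transfer)
    fix n assume n: "n \<in> {1..N}"
    show "n \<in> {1..N}" by fact
    show "AE y in lebesgue_on I. \<bar>\<alpha> n y\<bar> \<le> \<Lambda> \<and> \<bar>g y\<bar> \<le> M"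
      using ab n g by auto
  qed
  then show ?thesis
  proof eventually_elim
    case (elim x)
    show ?case
    proof (cases "x \<in> I")
      case True
      then obtain n where n: "n \<in> {1..N}" "x \<in> subI xs n" using subI_cover by blast
      have "\<bar>A g x\<bar> = \<bar>\<alpha> n (Linv xs N n x)\<bar> * \<bar>g (Linv xs N n x)\<bar>"
        using Aop_single[OF n] by (simp add: abs_mult)
      also have "\<dots> \<le> \<Lambda> * M" using elim n Lam1 by (intro mult_mono) auto
      finally show ?thesis .
    next
      case False then show ?thesis using Aop_out[OF False] M Lam1 by simp
    qed
  qed
qed

end



lemma pow_powr_swap:
  fixes \<rho> a :: real assumes "\<rho> > 0"
  shows "(\<rho> ^ k) powr a = (\<rho> powr a) ^ k"
proof -
  have "(\<rho> ^ k) powr a = (\<rho> powr real k) powr a" using assms by (simp add: powr_realpow)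
  also have "\<dots> = (\<rho> powr a) powr real k" by (simp add: powr_powr mult.commute)
  also have "\<dots> = (\<rho> powr a) ^ k" using assms by (simp add: powr_realpow)
  finally show ?thesis .
qed

context setting
begin

definition Dit :: "(real \<Rightarrow> real) \<Rightarrow> nat \<Rightarrow> real \<Rightarrow> real" where
  "Dit f k = (A ^^ k) f"

lemma Dit_0[simp]: "Dit f 0 = f" by (simp add: Dit_def)
lemma Dit_Suc[simp]: "Dit f (Suc k) = A (Dit f k)" by (simp add: Dit_def)

definition Sp :: "(real \<Rightarrow> real) \<Rightarrow> nat \<Rightarrow> real \<Rightarrow> real" where
  "Sp f k x = (\<Sum>j<k. Dit f j x)"

lemma Sp_Suc: "Sp f (Suc k) x = f x + A (Sp f k) x"
proof -
  have "Sp f (Suc k) x = Dit f 0 x + (\<Sum>j<k. Dit f (Suc j) x)"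
    unfolding Sp_def by (subst sum.lessThan_Suc_shift) simp
  also have "(\<Sum>j<k. Dit f (Suc j) x) = (\<Sum>j<k. A (Dit f j) x)" by simp
  also have "\<dots> = A (\<lambda>y. \<Sum>j<k. Dit f j y) x" by (rule Aop_sum[symmetric])
  also have "(\<lambda>y. \<Sum>j<k. Dit f j y) = Sp f k" by (simp add: Sp_def fun_eq_iff)
  finally show ?thesis by simp
qed

lemma Dit_meas: "f \<in> borel_measurable (lebesgue_on I) \<Longrightarrow> Dit f k \<in> borel_measurable (lebesgue_on I)"
  by (induction k) (auto intro: A_meas)

definition gfix :: "(real \<Rightarrow> real) \<Rightarrow> real \<Rightarrow> real" where
  "gfix f x = lim (\<lambda>k. Sp f k x)"

lemma gfix_meas:
  assumes f: "f \<in> borel_measurable (lebesgue_on I)"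
  shows "gfix f \<in> borel_measurable (lebesgue_on I)"
proof -
  have "\<And>k. Sp f k \<in> borel_measurable (lebesgue_on I)"
    unfolding Sp_def[abs_def] using Dit_meas[OF f] by measurable
  then show ?thesis unfolding gfix_def[abs_def] by measurable
qed

lemma gfix_summable:
  assumes "summable (\<lambda>k. Dit f k x)"
  shows "(\<lambda>k. Sp f k x) \<longlonglongrightarrow> gfix f x" and "gfix f x = (\<Sum>k. Dit f k x)"
proof -
  have l: "(\<lambda>k. Sp f k x) \<longlonglongrightarrow> (\<Sum>k. Dit f k x)"
    unfolding Sp_def using summable_LIMSEQ[OF assms] .
  then show "gfix f x = (\<Sum>k. Dit f k x)" unfolding gfix_def by (rule limI)
  with l show "(\<lambda>k. Sp f k x) \<longlonglongrightarrow> gfix f x" by simp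
qed

lemma fix_AE:
  assumes f: "f \<in> borel_measurable (lebesgue_on I)"
    and sm: "AE y in lebesgue_on I. summable (\<lambda>k. Dit f k y)"
  shows "AE x in lebesgue_on I. gfix f x = f x + A (gfix f) x"
proof -
  have cv: "AE y in lebesgue_on I. (\<lambda>k. Sp f k y) \<longlonglongrightarrow> gfix f y"
    using sm by eventually_elim (rule gfix_summable)
  have "AE x in lebesgue_on I. \<forall>n\<in>{1..N}. x \<in> subI xs n \<longrightarrow> (\<lambda>k. Sp f k (Linv xs N n x)) \<longlonglongrightarrow> gfix f (Linv xs N n x)"
    by (rule AE_finite_allI) (auto intro: AE_transfer cv)
  then show ?thesis using cv AE_space
  proof eventually_elim
    case (elim x)
    then have xI: "x \<in> I" by simp
    then obtain n where n: "n \<in> {1..N}" "x \<in> subI xs n" using subI_cover by blast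
    have "(\<lambda>k. \<alpha> n (Linv xs N n x) * Sp f k (Linv xs N n x)) \<longlonglongrightarrow> \<alpha> n (Linv xs N n x) * gfix f (Linv xs N n x)"
      using elim n by (intro tendsto_mult tendsto_const) auto
    then have "(\<lambda>k. f x + A (Sp f k) x) \<longlonglongrightarrow> f x + A (gfix f) x"
      using Aop_single[OF n] by (intro tendsto_add tendsto_const) simp
    then have "(\<lambda>k. Sp f (Suc k) x) \<longlonglongrightarrow> f x + A (gfix f) x" by (simp add: Sp_Suc)
    moreover have "(\<lambda>k. Sp f (Suc k) x) \<longlonglongrightarrow> gfix f x"
      using elim by (intro LIMSEQ_Suc) simp
    ultimately show ?case using LIMSEQ_unique by blast
  qed
qed

lemma exists_inf:
  assumes f: "f \<in> borel_measurable (lebesgue_on I)"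
    and M: "M \<ge> 0" and fb: "AE x in lebesgue_on I. \<bar>f x\<bar> \<le> M"
  shows "AE x in lebesgue_on I. \<bar>gfix f x\<bar> \<le> M / (1 - \<Lambda>)"
    and "AE x in lebesgue_on I. gfix f x = f x + A (gfix f) x"
proof -
  have b: "AE x in lebesgue_on I. \<bar>Dit f k x\<bar> \<le> \<Lambda> ^ k * M" for k
  proof (induction k)
    case 0 then show ?case using fb by simp
  next
    case (Suc k)
    have "AE x in lebesgue_on I. \<bar>A (Dit f k) x\<bar> \<le> \<Lambda> * (\<Lambda> ^ k * M)"
      by (rule A_AE_bound[OF Suc]) (use M Lam1 in simp)
    then show ?case by (simp add: mult.assoc)
  qed
  have L0: "0 \<le> \<Lambda>" "\<Lambda> < 1" using Lam1 Lam2 by auto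
  have sg: "summable (\<lambda>k. \<Lambda> ^ k * M)"
    using L0 by (intro summable_mult2 summable_geometric) simp
  have ball: "AE x in lebesgue_on I. \<forall>k. \<bar>Dit f k x\<bar> \<le> \<Lambda> ^ k * M"
    using b by (simp add: AE_all_countable)
  have sm: "AE x in lebesgue_on I. summable (\<lambda>k. Dit f k x)"
    using ball by eventually_elim (rule summable_comparison_test'[OF sg], simp)
  show "AE x in lebesgue_on I. gfix f x = f x + A (gfix f) x" by (rule fix_AE[OF f sm])
  show "AE x in lebesgue_on I. \<bar>gfix f x\<bar> \<le> M / (1 - \<Lambda>)"
    using ball sm
  proof eventually_elim
    case (elim x)
    have sa: "summable (\<lambda>k. \<bar>Dit f k x\<bar>)"
      by (rule summable_comparison_test'[OF sg]) (use elim in simp)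
    have "\<bar>gfix f x\<bar> = \<bar>\<Sum>k. Dit f k x\<bar>" using gfix_summable(2)[OF elim(2)] by simp
    also have "\<dots> \<le> (\<Sum>k. \<bar>Dit f k x\<bar>)" by (rule summable_rabs[OF sa])
    also have "\<dots> \<le> (\<Sum>k. \<Lambda> ^ k * M)" by (rule suminf_le) (use elim sa sg in auto)
    also have "\<dots> = M / (1 - \<Lambda>)"
      using suminf_geometric[of \<Lambda>] L0 by (simp add: suminf_mult2[OF summable_geometric, symmetric])
    finally show ?case .
  qed
qed

end



lemma ennreal_le_suminf: "(f k :: ennreal) \<le> suminf f"
  using sum_le_suminf[of f "{k}"] by simp

context setting
begin

lemma exists_fin:
  fixes r :: real
  assumes r: "r \<ge> 1" and f: "f \<in> borel_measurable (lebesgue_on I)"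
    and fi: "integrable (lebesgue_on I) (\<lambda>x. \<bar>f x\<bar> powr r)"
  shows "integrable (lebesgue_on I) (\<lambda>x. \<bar>gfix f x\<bar> powr r)"
    and "AE x in lebesgue_on I. gfix f x = f x + A (gfix f) x"
proof -
  define NP where "NP h = (\<integral>\<^sup>+x. ennreal (\<bar>h x\<bar> powr r) \<partial>lebesgue_on I)" for h
  define c0 where "c0 = integral\<^sup>L (lebesgue_on I) (\<lambda>x. \<bar>f x\<bar> powr r)"
  have c0: "NP f = ennreal c0" unfolding NP_def c0_def
    by (rule nn_integral_eq_integral[OF fi]) simp
  have ND: "NP (Dit f k) \<le> ennreal ((\<Lambda> powr r)^k) * NP f" for k
  proof (induction k)
    case 0 then show ?case by simp
  next
    case (Suc k)
    have "NP (Dit f (Suc k)) \<le> ennreal (\<Lambda> powr r) * NP (Dit f k)"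
      unfolding NP_def using NP_A[of r "Dit f k"] r Dit_meas[OF f] by simp
    also have "\<dots> \<le> ennreal (\<Lambda> powr r) * (ennreal ((\<Lambda> powr r)^k) * NP f)"
      by (rule mult_left_mono[OF Suc]) simp
    also have "\<dots> = ennreal ((\<Lambda> powr r)^(Suc k)) * NP f"
      by (simp add: ennreal_mult mult.assoc)
    finally show ?case .
  qed
  define lm where "lm = \<Lambda> powr r"
  have L0: "0 < \<Lambda>" "\<Lambda> \<le> 1" using Lam1 Lam2 by auto
  have lam: "0 < lm" "lm < 1"
  proof -
    show "0 < lm" using L0 by (simp add: lm_def)
    have "lm \<le> \<Lambda>" unfolding lm_def by (rule powr_le_one_le) (use L0 r in auto)
    then show "lm < 1" using Lam2 by simp
  qed
  define \<rho> where "\<rho> = (1 + lm) / 2"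
  have rho: "0 < \<rho>" "\<rho> < 1" "lm < \<rho>" using lam by (auto simp: \<rho>_def)
  define q where "q = lm / \<rho>"
  have q: "0 \<le> q" "q < 1" using rho lam by (auto simp: q_def)
  have c0nn: "c0 \<ge> 0" unfolding c0_def by simp
  define Sx where "Sx x = (\<Sum>k. ennreal ((1/\<rho>)^k * \<bar>Dit f k x\<bar> powr r))" for x
  have tm: "(\<lambda>x. ennreal ((1/\<rho>)^k * \<bar>Dit f k x\<bar> powr r)) \<in> borel_measurable (lebesgue_on I)" for k
    using Dit_meas[OF f, of k] by measurable
  have Sxm: "Sx \<in> borel_measurable (lebesgue_on I)"
    unfolding Sx_def[abs_def] using tm by measurable
  have "(\<integral>\<^sup>+x. Sx x \<partial>lebesgue_on I) = (\<Sum>k. \<integral>\<^sup>+x. ennreal ((1/\<rho>)^k * \<bar>Dit f k x\<bar> powr r) \<partial>lebesgue_on I)"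
    unfolding Sx_def by (rule nn_integral_suminf[OF tm])
  also have "\<dots> = (\<Sum>k. ennreal ((1/\<rho>)^k) * NP (Dit f k))"
  proof (rule arg_cong[where f=suminf], rule ext)
    fix k
    have "(\<integral>\<^sup>+x. ennreal ((1/\<rho>)^k * \<bar>Dit f k x\<bar> powr r) \<partial>lebesgue_on I)
        = (\<integral>\<^sup>+x. ennreal ((1/\<rho>)^k) * ennreal (\<bar>Dit f k x\<bar> powr r) \<partial>lebesgue_on I)"
      using rho by (simp add: ennreal_mult)
    also have "\<dots> = ennreal ((1/\<rho>)^k) * NP (Dit f k)"
      unfolding NP_def by (rule nn_integral_cmult) (use Dit_meas[OF f, of k] in measurable)
    finally show "(\<integral>\<^sup>+x. ennreal ((1/\<rho>)^k * \<bar>Dit f k x\<bar> powr r) \<partial>lebesgue_on I) = \<dots>" .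
  qed
  also have "\<dots> \<le> (\<Sum>k. ennreal (c0 * q^k))"
  proof (rule suminf_le[OF _ summableI summableI])
    fix k
    have "ennreal ((1/\<rho>)^k) * NP (Dit f k) \<le> ennreal ((1/\<rho>)^k) * (ennreal (lm^k) * ennreal c0)"
      using ND[of k] c0 by (intro mult_left_mono) (auto simp: lm_def)
    also have "\<dots> = ennreal (c0 * q^k)"
      using rho lam c0nn by (simp add: ennreal_mult[symmetric] q_def power_divide)
    finally show "ennreal ((1/\<rho>)^k) * NP (Dit f k) \<le> ennreal (c0 * q^k)" .
  qed
  also have "\<dots> = ennreal (\<Sum>k. c0 * q^k)"
    using q c0nn by (intro suminf_ennreal2 summable_mult summable_geometric) auto
  finally have intS: "(\<integral>\<^sup>+x. Sx x \<partial>lebesgue_on I) < \<infinity>" by (simp add: le_less_trans)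
  have Sfin: "AE x in lebesgue_on I. Sx x \<noteq> \<infinity>"
    by (rule nn_integral_PInf_AE[OF Sxm]) (use intS in auto)
  define \<sigma> where "\<sigma> = \<rho> powr (1/r)"
  have sig: "0 < \<sigma>" "\<sigma> < 1"
  proof -
    show "0 < \<sigma>" using rho by (simp add: \<sigma>_def)
    have "\<rho> powr (1/r) < 1 powr (1/r)" using rho r by (intro powr_less_mono2) auto
    then show "\<sigma> < 1" by (simp add: \<sigma>_def)
  qed
  define K where "K = (1 / (1 - \<sigma>)) powr r"
  have pw: "summable (\<lambda>k. Dit f k x) \<and> ennreal (\<bar>gfix f x\<bar> powr r) \<le> ennreal K * Sx x"
    if fin: "Sx x \<noteq> \<infinity>" for x
  proof -
    define s where "s = enn2real (Sx x)"
    have s: "Sx x = ennreal s" "s \<ge> 0" using fin by (auto simp: s_def less_top)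
    have bk: "\<bar>Dit f k x\<bar> \<le> s powr (1/r) * \<sigma>^k" for k
    proof -
      have "ennreal ((1/\<rho>)^k * \<bar>Dit f k x\<bar> powr r) \<le> Sx x"
        unfolding Sx_def by (rule ennreal_le_suminf)
      then have "(1/\<rho>)^k * \<bar>Dit f k x\<bar> powr r \<le> s" using s by simp
      then have "\<bar>Dit f k x\<bar> powr r \<le> s * \<rho>^k"
        using rho by (simp add: power_divide field_simps)
      then have "(\<bar>Dit f k x\<bar> powr r) powr (1/r) \<le> (s * \<rho>^k) powr (1/r)"
        using r by (intro powr_mono2) auto
      moreover have "(\<bar>Dit f k x\<bar> powr r) powr (1/r) = \<bar>Dit f k x\<bar>"
        using r by (simp add: powr_powr)
      moreover have "(s * \<rho>^k) powr (1/r) = s powr (1/r) * \<sigma>^k"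
        using rho by (simp add: powr_mult pow_powr_swap \<sigma>_def)
      ultimately show ?thesis by simp
    qed
    have sg: "summable (\<lambda>k. s powr (1/r) * \<sigma>^k)"
      using sig by (intro summable_mult summable_geometric) auto
    have sm: "summable (\<lambda>k. Dit f k x)"
      by (rule summable_comparison_test'[OF sg]) (use bk in simp)
    have sa: "summable (\<lambda>k. \<bar>Dit f k x\<bar>)"
      by (rule summable_comparison_test'[OF sg]) (use bk in simp)
    have "\<bar>gfix f x\<bar> = \<bar>\<Sum>k. Dit f k x\<bar>" using gfix_summable(2)[OF sm] by simp
    also have "\<dots> \<le> (\<Sum>k. \<bar>Dit f k x\<bar>)" by (rule summable_rabs[OF sa])
    also have "\<dots> \<le> (\<Sum>k. s powr (1/r) * \<sigma>^k)" by (rule suminf_le) (use bk sa sg in auto)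
    also have "\<dots> = s powr (1/r) * (1 / (1 - \<sigma>))"
      using suminf_geometric[of \<sigma>] sig by (simp add: suminf_mult[OF summable_geometric])
    finally have gb: "\<bar>gfix f x\<bar> \<le> s powr (1/r) * (1 / (1 - \<sigma>))" .
    have "\<bar>gfix f x\<bar> powr r \<le> (s powr (1/r) * (1 / (1 - \<sigma>))) powr r"
      using gb r by (intro powr_mono2) auto
    also have "\<dots> = s * K"
      using r s sig by (simp add: powr_divide powr_powr K_def)
    finally have "\<bar>gfix f x\<bar> powr r \<le> s * K" .
    then have "ennreal (\<bar>gfix f x\<bar> powr r) \<le> ennreal (s * K)" by (rule ennreal_leI)
    also have "\<dots> = ennreal K * Sx x" using s by (simp add: ennreal_mult' K_def mult.commute)
    finally show ?thesis using sm by simp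
  qed
  have sm: "AE x in lebesgue_on I. summable (\<lambda>k. Dit f k x)"
    using Sfin by eventually_elim (use pw in blast)
  show "AE x in lebesgue_on I. gfix f x = f x + A (gfix f) x" by (rule fix_AE[OF f sm])
  have "(\<integral>\<^sup>+x. ennreal (\<bar>gfix f x\<bar> powr r) \<partial>lebesgue_on I) \<le> (\<integral>\<^sup>+x. ennreal K * Sx x \<partial>lebesgue_on I)"
  proof (rule nn_integral_mono_AE)
    show "AE x in lebesgue_on I. ennreal (\<bar>gfix f x\<bar> powr r) \<le> ennreal K * Sx x"
      using Sfin by eventually_elim (use pw in blast)
  qed
  also have "\<dots> = ennreal K * (\<integral>\<^sup>+x. Sx x \<partial>lebesgue_on I)" by (rule nn_integral_cmult[OF Sxm])
  also have "\<dots> < \<infinity>" using intS by (simp add: ennreal_mult_less_top)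
  finally have fin: "(\<integral>\<^sup>+x. ennreal (\<bar>gfix f x\<bar> powr r) \<partial>lebesgue_on I) < \<infinity>" .
  show "integrable (lebesgue_on I) (\<lambda>x. \<bar>gfix f x\<bar> powr r)"
    unfolding integrable_iff_bounded using fin gfix_meas[OF f] by (simp, measurable)
qed

end



lemma powr_ge1_neg:
  fixes x r :: real assumes "0 < x" "x \<le> 1" "r \<ge> 1"
  shows "1 \<le> x powr (1 - r)"
proof -
  have "x powr (1 - r) = (1/x) powr (r - 1)"
    using assms by (simp add: powr_divide powr_minus_divide[symmetric] powr_minus)
  also have "1 \<le> \<dots>" using assms by (intro ge_one_powr_ge_zero) auto
  finally show ?thesis .
qed

lemma t_powr_aux:
  fixes t c r :: real assumes "t > 0"
  shows "t * (c / t) powr r = t powr (1 - r) * c powr r"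
  using assms by (simp add: powr_divide powr_diff)

lemma convex2:
  fixes a b r t :: real
  assumes r: "r \<ge> 1" and t: "0 < t" "t < 1"
  shows "\<bar>a + b\<bar> powr r \<le> t powr (1 - r) * \<bar>a\<bar> powr r + (1 - t) powr (1 - r) * \<bar>b\<bar> powr r"
proof (cases "a = 0 \<or> b = 0")
  case True
  have "1 \<le> t powr (1 - r)" "1 \<le> (1 - t) powr (1 - r)" using t r by (auto intro!: powr_ge1_neg)
  show ?thesis
  proof (cases "a = 0")
    case True
    have "\<bar>b\<bar> powr r \<le> (1 - t) powr (1 - r) * \<bar>b\<bar> powr r"
      using mult_right_mono[OF \<open>1 \<le> (1 - t) powr (1 - r)\<close>, of "\<bar>b\<bar> powr r"] by simp
    then show ?thesis using True by simp
  next
    case False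
    then have b: "b = 0" using \<open>a = 0 \<or> b = 0\<close> by simp
    have "\<bar>a\<bar> powr r \<le> t powr (1 - r) * \<bar>a\<bar> powr r"
      using mult_right_mono[OF \<open>1 \<le> t powr (1 - r)\<close>, of "\<bar>a\<bar> powr r"] by simp
    then show ?thesis using b by simp
  qed
next
  case False
  define X where "X = \<bar>a\<bar> / t"
  define Y where "Y = \<bar>b\<bar> / (1 - t)"
  have XY: "X \<in> {0<..}" "Y \<in> {0<..}" using False t by (auto simp: X_def Y_def)
  have "\<bar>a + b\<bar> \<le> t * X + (1 - t) * Y" using t by (simp add: X_def Y_def abs_triangle_ineq)
  then have "\<bar>a + b\<bar> powr r \<le> (t * X + (1 - t) * Y) powr r"
    using r by (intro powr_mono2) auto
  also have "\<dots> = (\<lambda>x. x powr r) ((1 - (1 - t)) *\<^sub>R X + (1 - t) *\<^sub>R Y)" by simp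
  also have "\<dots> \<le> (1 - (1 - t)) * X powr r + (1 - t) * Y powr r"
    by (rule convex_onD[OF powr_convex[OF r]]) (use t XY in auto)
  also have "\<dots> = t * (\<bar>a\<bar> / t) powr r + (1 - t) * (\<bar>b\<bar> / (1 - t)) powr r"
    by (simp add: X_def Y_def)
  also have "\<dots> = t powr (1 - r) * \<bar>a\<bar> powr r + (1 - t) powr (1 - r) * \<bar>b\<bar> powr r"
    using t by (simp add: t_powr_aux)
  finally show ?thesis .
qed

lemma real_of_ereal_le: "e \<le> ereal M \<Longrightarrow> M \<ge> 0 \<Longrightarrow> real_of_ereal e \<le> M"
  by (cases e) auto

locale psetting = setting +
  fixes p :: ereal
  assumes p1: "1 \<le> p"
begin

abbreviation "Lpp \<equiv> Lp p xs N"
abbreviation "nrm \<equiv> Lp_norm p xs N"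

lemma notAEFalse: "\<not> (AE x in lebesgue_on I. False)"
proof -
  have "emeasure (lebesgue_on I) (space (lebesgue_on I)) = emeasure lebesgue I"
    using I_sets by (simp add: emeasure_restrict_space)
  also have "\<dots> \<noteq> 0" using emeasure_I Lpos by simp
  finally show ?thesis using ae_filter_eq_bot_iff[of "lebesgue_on I"] by (simp add: eventually_False)
qed

lemma pcases:
  obtains (fin) r where "p = ereal r" "r \<ge> 1" | (inf) "p = \<infinity>"
  using p1 by (cases p) auto

lemma Lp_fin: "p = ereal r \<Longrightarrow> u \<in> Lpp \<longleftrightarrow>
   u \<in> borel_measurable (lebesgue_on I) \<and> integrable (lebesgue_on I) (\<lambda>x. \<bar>u x\<bar> powr r)"
  by (simp add: Lp_def)

lemma nrm_fin: "p = ereal r \<Longrightarrow> nrm u = (integral\<^sup>L (lebesgue_on I) (\<lambda>x. \<bar>u x\<bar> powr r)) powr (1 / r)"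
  by (simp add: Lp_norm_def)

lemma nrm_inf: "p = \<infinity> \<Longrightarrow> nrm u = real_of_ereal (esssup (lebesgue_on I) (\<lambda>x. ereal \<bar>u x\<bar>))"
  by (simp add: Lp_norm_def)

lemma Lp_inf: "p = \<infinity> \<Longrightarrow> u \<in> Lpp \<longleftrightarrow>
   u \<in> borel_measurable (lebesgue_on I) \<and> (\<exists>M\<ge>0. AE x in lebesgue_on I. \<bar>u x\<bar> \<le> M)"
proof
  assume p: "p = \<infinity>" and u: "u \<in> Lpp"
  then have um: "u \<in> borel_measurable (lebesgue_on I)"
    and es: "esssup (lebesgue_on I) (\<lambda>x. ereal \<bar>u x\<bar>) < \<infinity>" by (auto simp: Lp_def)
  define M where "M = max 0 (real_of_ereal (esssup (lebesgue_on I) (\<lambda>x. ereal \<bar>u x\<bar>)))"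
  have "AE x in lebesgue_on I. \<bar>u x\<bar> \<le> M"
    using esssup_AE[of "\<lambda>x. ereal \<bar>u x\<bar>" "lebesgue_on I"]
  proof eventually_elim
    case (elim x)
    then show ?case using es unfolding M_def
      by (cases "esssup (lebesgue_on I) (\<lambda>x. ereal \<bar>u x\<bar>)") auto
  qed
  then show "u \<in> borel_measurable (lebesgue_on I) \<and> (\<exists>M\<ge>0. AE x in lebesgue_on I. \<bar>u x\<bar> \<le> M)"
    using um by (intro conjI exI[of _ M]) (auto simp: M_def)
next
  assume p: "p = \<infinity>" and u: "u \<in> borel_measurable (lebesgue_on I) \<and> (\<exists>M\<ge>0. AE x in lebesgue_on I. \<bar>u x\<bar> \<le> M)"
  then obtain M where M: "M \<ge> 0" "AE x in lebesgue_on I. \<bar>u x\<bar> \<le> M" by blast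
  have "esssup (lebesgue_on I) (\<lambda>x. ereal \<bar>u x\<bar>) \<le> ereal M"
    by (rule esssup_I) (use u M(2) in auto)
  then show "u \<in> Lpp" using p u by (auto simp: Lp_def le_less_trans)
qed

lemma Lp_meas: "u \<in> Lpp \<Longrightarrow> u \<in> borel_measurable (lebesgue_on I)"
  by (simp add: Lp_def)

lemma nrm_inf_le:
  assumes p: "p = \<infinity>" and u: "u \<in> borel_measurable (lebesgue_on I)"
    and M: "M \<ge> 0" "AE x in lebesgue_on I. \<bar>u x\<bar> \<le> M"
  shows "nrm u \<le> M"
proof -
  have "esssup (lebesgue_on I) (\<lambda>x. ereal \<bar>u x\<bar>) \<le> ereal M"
    by (rule esssup_I) (use u M(2) in auto)
  then show ?thesis using p M(1) unfolding nrm_inf[OF p] by (simp add: real_of_ereal_le)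
qed

lemma nrm_inf_AE:
  assumes p: "p = \<infinity>" and u: "u \<in> Lpp"
  shows "AE x in lebesgue_on I. \<bar>u x\<bar> \<le> nrm u"
proof -
  have es: "esssup (lebesgue_on I) (\<lambda>x. ereal \<bar>u x\<bar>) < \<infinity>" using p u by (auto simp: Lp_def)
  show ?thesis
    using esssup_AE[of "\<lambda>x. ereal \<bar>u x\<bar>" "lebesgue_on I"]
  proof eventually_elim
    case (elim x)
    then show ?case using es p unfolding nrm_inf[OF p]
      by (cases "esssup (lebesgue_on I) (\<lambda>x. ereal \<bar>u x\<bar>)") auto
  qed
qed

lemma nrm_nonneg: "u \<in> Lpp \<Longrightarrow> nrm u \<ge> 0"
proof (cases rule: pcases)
  case (fin r) then show ?thesis by (simp add: Lp_norm_def)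
next
  case inf
  assume u: "u \<in> Lpp"
  show ?thesis
  proof (rule ccontr)
    assume "\<not> 0 \<le> nrm u"
    then have "AE x in lebesgue_on I. False" using nrm_inf_AE[OF inf u] by (auto elim: eventually_mono)
    then show False using notAEFalse by simp
  qed
qed

lemma nrm_cong:
  assumes u: "u \<in> borel_measurable (lebesgue_on I)" and v: "v \<in> borel_measurable (lebesgue_on I)"
    and eq: "AE x in lebesgue_on I. u x = v x"
  shows "nrm u = nrm v"
proof (cases rule: pcases)
  case (fin r)
  have "integral\<^sup>L (lebesgue_on I) (\<lambda>x. \<bar>u x\<bar> powr r) = integral\<^sup>L (lebesgue_on I) (\<lambda>x. \<bar>v x\<bar> powr r)"
    by (rule integral_cong_AE) (use u v eq in \<open>measurable, measurable, auto elim: eventually_mono\<close>)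
  then show ?thesis by (simp add: nrm_fin[OF fin(1)])
next
  case inf
  have "esssup (lebesgue_on I) (\<lambda>x. ereal \<bar>u x\<bar>) = esssup (lebesgue_on I) (\<lambda>x. ereal \<bar>v x\<bar>)"
    by (rule esssup_AE_cong) (use u v eq in \<open>measurable, measurable, auto elim: eventually_mono\<close>)
  then show ?thesis by (simp add: nrm_inf[OF inf])
qed

lemma nrm_zero: "nrm (\<lambda>x. 0) = 0"
proof (cases rule: pcases)
  case (fin r) then show ?thesis by (simp add: Lp_norm_def)
next
  case inf
  have "nrm (\<lambda>x. 0) \<le> 0" by (rule nrm_inf_le[OF inf]) auto
  moreover have "(\<lambda>x. 0) \<in> Lpp" using Lp_inf[OF inf, of "\<lambda>x. 0"] by auto
  ultimately show ?thesis using nrm_nonneg by (simp add: order_antisym)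
qed

lemma nrm_eq0:
  assumes u: "u \<in> Lpp" and z: "nrm u = 0"
  shows "AE x in lebesgue_on I. u x = 0"
proof (cases rule: pcases)
  case (fin r)
  have ui: "integrable (lebesgue_on I) (\<lambda>x. \<bar>u x\<bar> powr r)" using u Lp_fin[OF fin(1)] by simp
  have "integral\<^sup>L (lebesgue_on I) (\<lambda>x. \<bar>u x\<bar> powr r) = 0" using z by (simp add: nrm_fin[OF fin(1)])
  then have "AE x in lebesgue_on I. \<bar>u x\<bar> powr r = 0"
    using integral_nonneg_eq_0_iff_AE[OF ui] by simp
  then show ?thesis by (auto elim: eventually_mono)
next
  case inf
  show ?thesis using nrm_inf_AE[OF inf u] z by (auto elim: eventually_mono)
qed

end



context psetting
begin

lemma Lp_add:
  assumes u: "u \<in> Lpp" and v: "v \<in> Lpp"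
  shows "(\<lambda>x. u x + v x) \<in> Lpp"
proof (cases rule: pcases)
  case (fin r)
  have um: "u \<in> borel_measurable (lebesgue_on I)" and ui: "integrable (lebesgue_on I) (\<lambda>x. \<bar>u x\<bar> powr r)"
    using u Lp_fin[OF fin(1)] by auto
  have vm: "v \<in> borel_measurable (lebesgue_on I)" and vi: "integrable (lebesgue_on I) (\<lambda>x. \<bar>v x\<bar> powr r)"
    using v Lp_fin[OF fin(1)] by auto
  define c where "c = (1/2::real) powr (1 - r)"
  have "integrable (lebesgue_on I) (\<lambda>x. c * \<bar>u x\<bar> powr r + c * \<bar>v x\<bar> powr r)"
    by (rule Bochner_Integration.integrable_add[OF integrable_mult_right[OF ui] integrable_mult_right[OF vi]])
  then have "integrable (lebesgue_on I) (\<lambda>x. \<bar>u x + v x\<bar> powr r)"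
  proof (rule Bochner_Integration.integrable_bound)
    show "(\<lambda>x. \<bar>u x + v x\<bar> powr r) \<in> borel_measurable (lebesgue_on I)" using um vm by measurable
    show "AE x in lebesgue_on I. norm (\<bar>u x + v x\<bar> powr r) \<le> norm (c * \<bar>u x\<bar> powr r + c * \<bar>v x\<bar> powr r)"
    proof (rule AE_I2)
      fix x
      have "\<bar>u x + v x\<bar> powr r \<le> c * \<bar>u x\<bar> powr r + c * \<bar>v x\<bar> powr r"
        using convex2[of r "1/2" "u x" "v x"] fin by (simp add: c_def)
      moreover have "0 \<le> c" by (simp add: c_def)
      ultimately show "norm (\<bar>u x + v x\<bar> powr r) \<le> norm (c * \<bar>u x\<bar> powr r + c * \<bar>v x\<bar> powr r)"
        by simp
    qed
  qed
  then show ?thesis using um vm Lp_fin[OF fin(1)] by simp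
next
  case inf
  obtain M1 where M1: "M1 \<ge> 0" "AE x in lebesgue_on I. \<bar>u x\<bar> \<le> M1" and um: "u \<in> borel_measurable (lebesgue_on I)"
    using u Lp_inf[OF inf] by auto
  obtain M2 where M2: "M2 \<ge> 0" "AE x in lebesgue_on I. \<bar>v x\<bar> \<le> M2" and vm: "v \<in> borel_measurable (lebesgue_on I)"
    using v Lp_inf[OF inf] by auto
  have "AE x in lebesgue_on I. \<bar>u x + v x\<bar> \<le> M1 + M2"
    using M1(2) M2(2) by eventually_elim (use abs_triangle_ineq in \<open>fastforce\<close>)
  moreover have "(\<lambda>x. u x + v x) \<in> borel_measurable (lebesgue_on I)" using um vm by measurable
  ultimately show ?thesis using Lp_inf[OF inf] M1 M2 by (metis add_nonneg_nonneg)
qed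

lemma Lp_cmult:
  assumes u: "u \<in> Lpp"
  shows "(\<lambda>x. c * u x) \<in> Lpp"
proof (cases rule: pcases)
  case (fin r)
  have um: "u \<in> borel_measurable (lebesgue_on I)" and ui: "integrable (lebesgue_on I) (\<lambda>x. \<bar>u x\<bar> powr r)"
    using u Lp_fin[OF fin(1)] by auto
  have "integrable (lebesgue_on I) (\<lambda>x. \<bar>c\<bar> powr r * \<bar>u x\<bar> powr r)"
    using ui by (intro integrable_mult_right)
  then have "integrable (lebesgue_on I) (\<lambda>x. \<bar>c * u x\<bar> powr r)"
    by (simp add: abs_mult powr_mult)
  then show ?thesis using um Lp_fin[OF fin(1)] by simp
next
  case inf
  obtain M1 where M1: "M1 \<ge> 0" "AE x in lebesgue_on I. \<bar>u x\<bar> \<le> M1" and um: "u \<in> borel_measurable (lebesgue_on I)"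
    using u Lp_inf[OF inf] by auto
  have "AE x in lebesgue_on I. \<bar>c * u x\<bar> \<le> \<bar>c\<bar> * M1"
    using M1(2) by eventually_elim (simp add: abs_mult mult_left_mono)
  moreover have "(\<lambda>x. c * u x) \<in> borel_measurable (lebesgue_on I)" using um by measurable
  ultimately show ?thesis using Lp_inf[OF inf] M1 by (metis abs_ge_zero mult_nonneg_nonneg)
qed

lemma Lp_diff:
  assumes u: "u \<in> Lpp" and v: "v \<in> Lpp"
  shows "(\<lambda>x. u x - v x) \<in> Lpp"
  using Lp_add[OF u Lp_cmult[OF v, of "-1"]] by simp

lemma Lp_zero: "(\<lambda>x. 0) \<in> Lpp"
proof (cases rule: pcases)
  case (fin r) then show ?thesis using Lp_fin[OF fin(1)] by simp
next
  case inf then show ?thesis using Lp_inf[OF inf, of "\<lambda>x. 0"] by auto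
qed

lemma Lp_sum:
  assumes "finite J" "\<And>j. j \<in> J \<Longrightarrow> u j \<in> Lpp"
  shows "(\<lambda>x. \<Sum>j\<in>J. u j x) \<in> Lpp"
  using assms
proof (induction J rule: finite_induct)
  case empty then show ?case using Lp_zero by simp
next
  case (insert j J)
  then show ?case using Lp_add[of "u j" "\<lambda>x. \<Sum>j\<in>J. u j x"] by simp
qed

lemma NP_eq:
  assumes "integrable (lebesgue_on I) (\<lambda>x. \<bar>u x\<bar> powr r)"
  shows "(\<integral>\<^sup>+x. ennreal (\<bar>u x\<bar> powr r) \<partial>lebesgue_on I) = ennreal (integral\<^sup>L (lebesgue_on I) (\<lambda>x. \<bar>u x\<bar> powr r))"
  by (rule nn_integral_eq_integral[OF assms]) simp

lemma Lp_A_fin: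
  assumes fin: "p = ereal r" "r \<ge> 1" and u: "u \<in> Lpp"
  shows "A u \<in> Lpp"
    and "integral\<^sup>L (lebesgue_on I) (\<lambda>x. \<bar>A u x\<bar> powr r) \<le> \<Lambda> powr r * integral\<^sup>L (lebesgue_on I) (\<lambda>x. \<bar>u x\<bar> powr r)"
proof -
  have um: "u \<in> borel_measurable (lebesgue_on I)" and ui: "integrable (lebesgue_on I) (\<lambda>x. \<bar>u x\<bar> powr r)"
    using u Lp_fin[OF fin(1)] by auto
  have Am: "A u \<in> borel_measurable (lebesgue_on I)" by (rule A_meas[OF um])
  have le: "(\<integral>\<^sup>+x. ennreal (\<bar>A u x\<bar> powr r) \<partial>lebesgue_on I) \<le> ennreal (\<Lambda> powr r * integral\<^sup>L (lebesgue_on I) (\<lambda>x. \<bar>u x\<bar> powr r))"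
    using NP_A[of r u] fin um NP_eq[OF ui] by (simp add: ennreal_mult)
  then have fin': "(\<integral>\<^sup>+x. ennreal (norm (\<bar>A u x\<bar> powr r)) \<partial>lebesgue_on I) < \<infinity>"
    by (simp add: le_less_trans)
  have Ai: "integrable (lebesgue_on I) (\<lambda>x. \<bar>A u x\<bar> powr r)"
    unfolding integrable_iff_bounded using fin' Am by (simp, measurable)
  then show "A u \<in> Lpp" using Am Lp_fin[OF fin(1)] by simp
  show "integral\<^sup>L (lebesgue_on I) (\<lambda>x. \<bar>A u x\<bar> powr r) \<le> \<Lambda> powr r * integral\<^sup>L (lebesgue_on I) (\<lambda>x. \<bar>u x\<bar> powr r)"
  proof -
    have "0 \<le> \<Lambda> powr r * integral\<^sup>L (lebesgue_on I) (\<lambda>x. \<bar>u x\<bar> powr r)"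
      by (intro mult_nonneg_nonneg integral_nonneg) auto
    then show ?thesis using le NP_eq[OF Ai] by simp
  qed
qed

lemma Lp_A: "u \<in> Lpp \<Longrightarrow> A u \<in> Lpp"
proof (cases rule: pcases)
  case (fin r) then show "u \<in> Lpp \<Longrightarrow> A u \<in> Lpp" using Lp_A_fin by blast
next
  case inf
  assume u: "u \<in> Lpp"
  obtain M1 where M1: "M1 \<ge> 0" "AE x in lebesgue_on I. \<bar>u x\<bar> \<le> M1" and um: "u \<in> borel_measurable (lebesgue_on I)"
    using u Lp_inf[OF inf] by auto
  have "AE x in lebesgue_on I. \<bar>A u x\<bar> \<le> \<Lambda> * M1" by (rule A_AE_bound[OF M1(2) M1(1)])
  moreover have "\<Lambda> * M1 \<ge> 0" using Lam1 M1 by simp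
  ultimately show ?thesis using Lp_inf[OF inf] A_meas[OF um] by blast
qed

end



context psetting
begin

lemma K1: "\<exists>K1\<ge>0. \<forall>u\<in>Lpp. nrm (\<lambda>x. u x - A u x) \<le> K1 * nrm u"
proof (cases rule: pcases)
  case (fin r)
  define c where "c = (1/2::real) powr (1 - r)"
  define C where "C = c * (1 + \<Lambda> powr r)"
  have C0: "C \<ge> 0" by (simp add: C_def c_def)
  show ?thesis
  proof (intro exI[of _ "C powr (1/r)"] conjI ballI)
    show "0 \<le> C powr (1/r)" by simp
    fix u assume u: "u \<in> Lpp"
    define Q where "Q h = integral\<^sup>L (lebesgue_on I) (\<lambda>x. \<bar>h x\<bar> powr r)" for h
    have Au: "A u \<in> Lpp" and QA: "Q (A u) \<le> \<Lambda> powr r * Q u" using Lp_A_fin[OF fin u] by (auto simp: Q_def)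
    have ui: "integrable (lebesgue_on I) (\<lambda>x. \<bar>u x\<bar> powr r)" using u Lp_fin[OF fin(1)] by auto
    have Ai: "integrable (lebesgue_on I) (\<lambda>x. \<bar>A u x\<bar> powr r)" using Au Lp_fin[OF fin(1)] by auto
    have Bi: "integrable (lebesgue_on I) (\<lambda>x. \<bar>u x - A u x\<bar> powr r)"
      using Lp_diff[OF u Au] Lp_fin[OF fin(1)] by auto
    have "Q (\<lambda>x. u x - A u x) \<le> integral\<^sup>L (lebesgue_on I) (\<lambda>x. c * \<bar>u x\<bar> powr r + c * \<bar>A u x\<bar> powr r)"
      unfolding Q_def
    proof (rule integral_mono[OF Bi])
      show "integrable (lebesgue_on I) (\<lambda>x. c * \<bar>u x\<bar> powr r + c * \<bar>A u x\<bar> powr r)"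
        by (rule Bochner_Integration.integrable_add[OF integrable_mult_right[OF ui] integrable_mult_right[OF Ai]])
      fix x
      show "\<bar>u x - A u x\<bar> powr r \<le> c * \<bar>u x\<bar> powr r + c * \<bar>A u x\<bar> powr r"
        using convex2[of r "1/2" "u x" "- A u x"] fin by (simp add: c_def)
    qed
    also have "\<dots> = c * Q u + c * Q (A u)" unfolding Q_def
      using ui Ai by simp
    also have "\<dots> \<le> c * Q u + c * (\<Lambda> powr r * Q u)"
      using QA by (intro add_left_mono mult_left_mono) (auto simp: c_def)
    also have "\<dots> = C * Q u" by (simp add: C_def algebra_simps)
    finally have le: "Q (\<lambda>x. u x - A u x) \<le> C * Q u" .
    have "nrm (\<lambda>x. u x - A u x) = Q (\<lambda>x. u x - A u x) powr (1/r)" by (simp add: nrm_fin[OF fin(1)] Q_def)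
    also have "\<dots> \<le> (C * Q u) powr (1/r)"
      using le fin by (intro powr_mono2) (auto simp: Q_def)
    also have "\<dots> = C powr (1/r) * nrm u" by (simp add: powr_mult nrm_fin[OF fin(1)] Q_def)
    finally show "nrm (\<lambda>x. u x - A u x) \<le> C powr (1/r) * nrm u" .
  qed
next
  case inf
  show ?thesis
  proof (intro exI[of _ "1 + \<Lambda>"] conjI ballI)
    show "0 \<le> 1 + \<Lambda>" using Lam1 by simp
    fix u assume u: "u \<in> Lpp"
    have n0: "nrm u \<ge> 0" by (rule nrm_nonneg[OF u])
    have b1: "AE x in lebesgue_on I. \<bar>u x\<bar> \<le> nrm u" by (rule nrm_inf_AE[OF inf u])
    have b2: "AE x in lebesgue_on I. \<bar>A u x\<bar> \<le> \<Lambda> * nrm u" by (rule A_AE_bound[OF b1 n0])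
    have "nrm (\<lambda>x. u x - A u x) \<le> nrm u + \<Lambda> * nrm u"
    proof (rule nrm_inf_le[OF inf])
      show "(\<lambda>x. u x - A u x) \<in> borel_measurable (lebesgue_on I)"
        using Lp_meas[OF u] A_meas[OF Lp_meas[OF u]] by measurable
      show "0 \<le> nrm u + \<Lambda> * nrm u" using n0 Lam1 by simp
      show "AE x in lebesgue_on I. \<bar>u x - A u x\<bar> \<le> nrm u + \<Lambda> * nrm u"
        using b1 b2 by eventually_elim (use abs_triangle_ineq4 in \<open>fastforce\<close>)
    qed
    then show "nrm (\<lambda>x. u x - A u x) \<le> (1 + \<Lambda>) * nrm u" by (simp add: algebra_simps)
  qed
qed

lemma K2: "\<exists>K2\<ge>0. \<forall>u\<in>Lpp. nrm u \<le> K2 * nrm (\<lambda>x. u x - A u x)"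
proof (cases rule: pcases)
  case (fin r)
  define s where "s = \<Lambda> powr (1/2)"
  define t where "t = 1 - s"
  have L0: "0 < \<Lambda>" "\<Lambda> < 1" using Lam1 Lam2 by auto
  have s: "0 < s" "s < 1"
  proof -
    show "0 < s" using L0 by (simp add: s_def)
    have "\<Lambda> powr (1/2) < 1 powr (1/2)" using L0 by (intro powr_less_mono2) auto
    then show "s < 1" by (simp add: s_def)
  qed
  have t: "0 < t" "t < 1" using s by (auto simp: t_def)
  define \<kappa> where "\<kappa> = s powr (1 - r) * \<Lambda> powr r"
  have ka: "0 \<le> \<kappa>" "\<kappa> < 1"
  proof -
    show "0 \<le> \<kappa>" by (simp add: \<kappa>_def)
    have "\<kappa> = \<Lambda> powr ((1 + r) / 2)"
      unfolding \<kappa>_def s_def by (simp add: powr_powr powr_add[symmetric] field_simps)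
    also have "\<dots> \<le> \<Lambda>" by (rule powr_le_one_le) (use L0 fin in auto)
    finally show "\<kappa> < 1" using L0 by simp
  qed
  define C where "C = t powr (1 - r) / (1 - \<kappa>)"
  have C0: "C \<ge> 0" using ka by (simp add: C_def)
  show ?thesis
  proof (intro exI[of _ "C powr (1/r)"] conjI ballI)
    show "0 \<le> C powr (1/r)" by simp
    fix u assume u: "u \<in> Lpp"
    define Q where "Q h = integral\<^sup>L (lebesgue_on I) (\<lambda>x. \<bar>h x\<bar> powr r)" for h
    have Au: "A u \<in> Lpp" and QA: "Q (A u) \<le> \<Lambda> powr r * Q u" using Lp_A_fin[OF fin u] by (auto simp: Q_def)
    have ui: "integrable (lebesgue_on I) (\<lambda>x. \<bar>u x\<bar> powr r)" using u Lp_fin[OF fin(1)] by auto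
    have Ai: "integrable (lebesgue_on I) (\<lambda>x. \<bar>A u x\<bar> powr r)" using Au Lp_fin[OF fin(1)] by auto
    have Bi: "integrable (lebesgue_on I) (\<lambda>x. \<bar>u x - A u x\<bar> powr r)"
      using Lp_diff[OF u Au] Lp_fin[OF fin(1)] by auto
    have "Q u \<le> integral\<^sup>L (lebesgue_on I) (\<lambda>x. t powr (1 - r) * \<bar>u x - A u x\<bar> powr r + s powr (1 - r) * \<bar>A u x\<bar> powr r)"
      unfolding Q_def
    proof (rule integral_mono[OF ui])
      show "integrable (lebesgue_on I) (\<lambda>x. t powr (1 - r) * \<bar>u x - A u x\<bar> powr r + s powr (1 - r) * \<bar>A u x\<bar> powr r)"
        by (rule Bochner_Integration.integrable_add[OF integrable_mult_right[OF Bi] integrable_mult_right[OF Ai]])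
      fix x
      show "\<bar>u x\<bar> powr r \<le> t powr (1 - r) * \<bar>u x - A u x\<bar> powr r + s powr (1 - r) * \<bar>A u x\<bar> powr r"
        using convex2[of r t "u x - A u x" "A u x"] fin t by (simp add: t_def)
    qed
    also have "\<dots> = t powr (1 - r) * Q (\<lambda>x. u x - A u x) + s powr (1 - r) * Q (A u)" unfolding Q_def
      using Bi Ai by simp
    also have "\<dots> \<le> t powr (1 - r) * Q (\<lambda>x. u x - A u x) + s powr (1 - r) * (\<Lambda> powr r * Q u)"
      using QA by (intro add_left_mono mult_left_mono) auto
    also have "\<dots> = t powr (1 - r) * Q (\<lambda>x. u x - A u x) + \<kappa> * Q u" by (simp add: \<kappa>_def)
    finally have "(1 - \<kappa>) * Q u \<le> t powr (1 - r) * Q (\<lambda>x. u x - A u x)" by (simp add: algebra_simps)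
    then have le: "Q u \<le> C * Q (\<lambda>x. u x - A u x)" using ka by (simp add: C_def field_simps)
    have "nrm u = Q u powr (1/r)" by (simp add: nrm_fin[OF fin(1)] Q_def)
    also have "\<dots> \<le> (C * Q (\<lambda>x. u x - A u x)) powr (1/r)"
      using le fin by (intro powr_mono2) (auto simp: Q_def)
    also have "\<dots> = C powr (1/r) * nrm (\<lambda>x. u x - A u x)" by (simp add: powr_mult nrm_fin[OF fin(1)] Q_def)
    finally show "nrm u \<le> C powr (1/r) * nrm (\<lambda>x. u x - A u x)" .
  qed
next
  case inf
  show ?thesis
  proof (intro exI[of _ "1 / (1 - \<Lambda>)"] conjI ballI)
    show "0 \<le> 1 / (1 - \<Lambda>)" using Lam2 by simp
    fix u assume u: "u \<in> Lpp"
    have Bu: "(\<lambda>x. u x - A u x) \<in> Lpp" by (rule Lp_diff[OF u Lp_A[OF u]])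
    have n0: "nrm u \<ge> 0" by (rule nrm_nonneg[OF u])
    have nb0: "nrm (\<lambda>x. u x - A u x) \<ge> 0" by (rule nrm_nonneg[OF Bu])
    have b1: "AE x in lebesgue_on I. \<bar>u x\<bar> \<le> nrm u" by (rule nrm_inf_AE[OF inf u])
    have b2: "AE x in lebesgue_on I. \<bar>A u x\<bar> \<le> \<Lambda> * nrm u" by (rule A_AE_bound[OF b1 n0])
    have b3: "AE x in lebesgue_on I. \<bar>u x - A u x\<bar> \<le> nrm (\<lambda>x. u x - A u x)" by (rule nrm_inf_AE[OF inf Bu])
    have "nrm u \<le> nrm (\<lambda>x. u x - A u x) + \<Lambda> * nrm u"
    proof (rule nrm_inf_le[OF inf Lp_meas[OF u]])
      show "0 \<le> nrm (\<lambda>x. u x - A u x) + \<Lambda> * nrm u" using n0 nb0 Lam1 by simp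
      show "AE x in lebesgue_on I. \<bar>u x\<bar> \<le> nrm (\<lambda>x. u x - A u x) + \<Lambda> * nrm u"
        using b2 b3 by eventually_elim (use abs_triangle_ineq in \<open>fastforce\<close>)
    qed
    then have "(1 - \<Lambda>) * nrm u \<le> nrm (\<lambda>x. u x - A u x)" by (simp add: algebra_simps)
    then show "nrm u \<le> 1 / (1 - \<Lambda>) * nrm (\<lambda>x. u x - A u x)" using Lam2 by (simp add: field_simps)
  qed
qed

lemma exists_Lp:
  assumes f: "f \<in> Lpp"
  shows "gfix f \<in> Lpp" "AE x in lebesgue_on I. gfix f x = f x + A (gfix f) x"
proof -
  have "gfix f \<in> Lpp \<and> (AE x in lebesgue_on I. gfix f x = f x + A (gfix f) x)"
  proof (cases rule: pcases)
    case (fin r)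
    have fm: "f \<in> borel_measurable (lebesgue_on I)" and fi: "integrable (lebesgue_on I) (\<lambda>x. \<bar>f x\<bar> powr r)"
      using f Lp_fin[OF fin(1)] by auto
    show ?thesis using exists_fin[OF fin(2) fm fi] gfix_meas[OF fm] Lp_fin[OF fin(1)] by auto
  next
    case inf
    obtain M where M: "M \<ge> 0" "AE x in lebesgue_on I. \<bar>f x\<bar> \<le> M" and fm: "f \<in> borel_measurable (lebesgue_on I)"
      using f Lp_inf[OF inf] by auto
    have "M / (1 - \<Lambda>) \<ge> 0" using M Lam2 by simp
    then show ?thesis using exists_inf[OF fm M] gfix_meas[OF fm] Lp_inf[OF inf] by blast
  qed
  then show "gfix f \<in> Lpp" "AE x in lebesgue_on I. gfix f x = f x + A (gfix f) x" by auto
qed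

lemma T_eq: "fractal_T xs N \<alpha> f (\<lambda>_. 0) g x = f x + A g x"
  by (simp add: fractal_T_def Aop_def)

lemma fractal_spec:
  assumes f: "f \<in> Lpp"
  shows "fractal_fun p xs N \<alpha> f (\<lambda>_. 0) \<in> Lpp"
    "AE x in lebesgue_on I. fractal_fun p xs N \<alpha> f (\<lambda>_. 0) x = f x + A (fractal_fun p xs N \<alpha> f (\<lambda>_. 0)) x"
proof -
  define P where "P g \<longleftrightarrow> g \<in> Lpp \<and> nrm (\<lambda>x. fractal_T xs N \<alpha> f (\<lambda>_. 0) g x - g x) = 0" for g
  have fm: "f \<in> borel_measurable (lebesgue_on I)" by (rule Lp_meas[OF f])
  have "P (gfix f)"
  proof -
    have g: "gfix f \<in> Lpp" by (rule exists_Lp(1)[OF f])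
    have gm: "gfix f \<in> borel_measurable (lebesgue_on I)" by (rule Lp_meas[OF g])
    have "nrm (\<lambda>x. fractal_T xs N \<alpha> f (\<lambda>_. 0) (gfix f) x - gfix f x) = nrm (\<lambda>x. 0)"
    proof (rule nrm_cong)
      show "(\<lambda>x. fractal_T xs N \<alpha> f (\<lambda>_. 0) (gfix f) x - gfix f x) \<in> borel_measurable (lebesgue_on I)"
        unfolding T_eq using fm gm A_meas[OF gm] by measurable
      show "(\<lambda>x. 0::real) \<in> borel_measurable (lebesgue_on I)" by simp
      show "AE x in lebesgue_on I. fractal_T xs N \<alpha> f (\<lambda>_. 0) (gfix f) x - gfix f x = 0"
        using exists_Lp(2)[OF f] by eventually_elim (simp add: T_eq)
    qed
    then show ?thesis using g nrm_zero by (simp add: P_def)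
  qed
  then have "P (SOME g. P g)" using someI[of P "gfix f"] by blast
  moreover have "fractal_fun p xs N \<alpha> f (\<lambda>_. 0) = (SOME g. P g)"
    unfolding fractal_fun_def P_def by (rule refl)
  ultimately have "P (fractal_fun p xs N \<alpha> f (\<lambda>_. 0))" by simp
  then have e: "fractal_fun p xs N \<alpha> f (\<lambda>_. 0) \<in> Lpp"
    and z: "nrm (\<lambda>x. fractal_T xs N \<alpha> f (\<lambda>_. 0) (fractal_fun p xs N \<alpha> f (\<lambda>_. 0)) x - fractal_fun p xs N \<alpha> f (\<lambda>_. 0) x) = 0"
    by (auto simp: P_def)
  show "fractal_fun p xs N \<alpha> f (\<lambda>_. 0) \<in> Lpp" by (rule e)
  have "(\<lambda>x. fractal_T xs N \<alpha> f (\<lambda>_. 0) (fractal_fun p xs N \<alpha> f (\<lambda>_. 0)) x - fractal_fun p xs N \<alpha> f (\<lambda>_. 0) x) \<in> Lpp"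
    unfolding T_eq by (rule Lp_diff[OF Lp_add[OF f Lp_A[OF e]] e])
  from nrm_eq0[OF this z]
  show "AE x in lebesgue_on I. fractal_fun p xs N \<alpha> f (\<lambda>_. 0) x = f x + A (fractal_fun p xs N \<alpha> f (\<lambda>_. 0)) x"
    by eventually_elim (simp add: T_eq)
qed

end



context psetting
begin

lemma A_lin:
  "A (\<lambda>y. g y - (\<Sum>m<k. c m * e m y)) x = A g x - (\<Sum>m<k. c m * A (e m) x)"
proof -
  have "A (\<lambda>y. g y - (\<Sum>m<k. c m * e m y)) x = A g x - A (\<lambda>y. \<Sum>m<k. c m * e m y) x"
    by (rule Aop_diff)
  also have "A (\<lambda>y. \<Sum>m<k. c m * e m y) x = (\<Sum>m<k. A (\<lambda>y. c m * e m y) x)" by (rule Aop_sum)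
  also have "\<dots> = (\<Sum>m<k. c m * A (e m) x)" by (simp add: Aop_cmult)
  finally show ?thesis .
qed

lemma main:
  assumes hyp: "schauder_basis_of p xs N Lpp f"
  shows "schauder_sequence p xs N (\<lambda>m. fractal_fun p xs N \<alpha> (f m) (\<lambda>_. 0))"
proof -
  define e where "e m = fractal_fun p xs N \<alpha> (f m) (\<lambda>_. 0)" for m
  have fm: "f m \<in> Lpp" for m using hyp by (simp add: schauder_basis_of_def)
  have em: "e m \<in> Lpp" for m unfolding e_def by (rule fractal_spec(1)[OF fm])
  have eAE: "AE x in lebesgue_on I. \<forall>m. e m x = f m x + A (e m) x"
    unfolding AE_all_countable e_def using fractal_spec(2)[OF fm] by blast
  obtain K1 where K1: "K1 \<ge> 0" "\<And>u. u \<in> Lpp \<Longrightarrow> nrm (\<lambda>x. u x - A u x) \<le> K1 * nrm u" using K1 by blast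
  obtain K2 where K2: "K2 \<ge> 0" "\<And>u. u \<in> Lpp \<Longrightarrow> nrm u \<le> K2 * nrm (\<lambda>x. u x - A u x)" using K2 by blast
  have RL: "(\<lambda>y. g y - (\<Sum>m<k. c m * e m y)) \<in> Lpp" if g: "g \<in> Lpp" for g c k
    by (rule Lp_diff[OF g Lp_sum]) (auto intro: Lp_cmult em)
  have key: "nrm (\<lambda>x. g x - A g x - (\<Sum>m<k. c m * f m x))
      = nrm (\<lambda>x. (g x - (\<Sum>m<k. c m * e m x)) - A (\<lambda>y. g y - (\<Sum>m<k. c m * e m y)) x)"
    if g: "g \<in> Lpp" for g c k
  proof (rule nrm_cong)
    have gm: "g \<in> borel_measurable (lebesgue_on I)" by (rule Lp_meas[OF g])
    show "(\<lambda>x. g x - A g x - (\<Sum>m<k. c m * f m x)) \<in> borel_measurable (lebesgue_on I)"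
      by (rule Lp_meas, rule Lp_diff[OF Lp_diff[OF g Lp_A[OF g]] Lp_sum]) (auto intro: Lp_cmult fm)
    show "(\<lambda>x. (g x - (\<Sum>m<k. c m * e m x)) - A (\<lambda>y. g y - (\<Sum>m<k. c m * e m y)) x) \<in> borel_measurable (lebesgue_on I)"
      by (rule Lp_meas, rule Lp_diff[OF RL[OF g] Lp_A[OF RL[OF g]]])
    show "AE x in lebesgue_on I. g x - A g x - (\<Sum>m<k. c m * f m x)
        = (g x - (\<Sum>m<k. c m * e m x)) - A (\<lambda>y. g y - (\<Sum>m<k. c m * e m y)) x"
      using eAE
    proof eventually_elim
      case (elim x)
      have "(\<Sum>m<k. c m * f m x) = (\<Sum>m<k. c m * e m x) - (\<Sum>m<k. c m * A (e m) x)"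
        by (simp add: elim right_diff_distrib sum_subtractf[symmetric] distrib_left)
      then show ?case by (simp add: A_lin)
    qed
  qed
  have part1: "e m \<in> closed_span p xs N e" for m
    unfolding closed_span_def
  proof (intro CollectI conjI allI impI em)
    fix \<epsilon> :: real assume \<epsilon>: "\<epsilon> > 0"
    have "(\<lambda>x. e m x - (\<Sum>j<Suc m. (if j = m then 1 else 0) * e j x)) = (\<lambda>x. 0)"
      by (simp add: if_distrib cong: if_cong)
    then have "nrm (\<lambda>x. e m x - (\<Sum>j<Suc m. (if j = m then 1 else 0) * e j x)) < \<epsilon>"
      using \<epsilon> nrm_zero by simp
    then show "\<exists>k c. nrm (\<lambda>x. e m x - (\<Sum>j<k. c j * e j x)) < \<epsilon>"
      by (intro exI[of _ "Suc m"] exI[of _ "\<lambda>j. if j = m then 1 else 0"])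
  qed
  have part2: "\<exists>!c. (\<lambda>k. nrm (\<lambda>x. g x - (\<Sum>m<k. c m * e m x))) \<longlonglongrightarrow> 0"
    if gs: "g \<in> closed_span p xs N e" for g
  proof -
    have g: "g \<in> Lpp" using gs by (simp add: closed_span_def)
    have Bg: "(\<lambda>x. g x - A g x) \<in> Lpp" by (rule Lp_diff[OF g Lp_A[OF g]])
    have ball: "\<forall>h\<in>Lpp. \<exists>!c. (\<lambda>k. nrm (\<lambda>x. h x - (\<Sum>m<k. c m * f m x))) \<longlonglongrightarrow> 0"
      using hyp by (simp add: schauder_basis_of_def)
    have ex1: "\<exists>!c. (\<lambda>k. nrm (\<lambda>x. g x - A g x - (\<Sum>m<k. c m * f m x))) \<longlonglongrightarrow> 0"
      using bspec[OF ball Bg] by simp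
    obtain c where
      c: "(\<lambda>k. nrm (\<lambda>x. g x - A g x - (\<Sum>m<k. c m * f m x))) \<longlonglongrightarrow> 0"
      and cu0: "\<forall>c'. (\<lambda>k. nrm (\<lambda>x. g x - A g x - (\<Sum>m<k. c' m * f m x))) \<longlonglongrightarrow> 0 \<longrightarrow> c' = c"
      using ex1 by (rule ex1E)
    have cu: "\<And>c'. (\<lambda>k. nrm (\<lambda>x. g x - A g x - (\<Sum>m<k. c' m * f m x))) \<longlonglongrightarrow> 0 \<Longrightarrow> c' = c"
      using cu0 by blast
    show ?thesis
    proof (rule ex1I[of _ c])
      show "(\<lambda>k. nrm (\<lambda>x. g x - (\<Sum>m<k. c m * e m x))) \<longlonglongrightarrow> 0"
      proof (rule tendsto_sandwich[of "\<lambda>_. 0" _ _ "\<lambda>k. K2 * nrm (\<lambda>x. g x - A g x - (\<Sum>m<k. c m * f m x))"])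
        show "\<forall>\<^sub>F k in sequentially. 0 \<le> nrm (\<lambda>x. g x - (\<Sum>m<k. c m * e m x))"
          by (intro always_eventually allI nrm_nonneg RL g)
        show "\<forall>\<^sub>F k in sequentially. nrm (\<lambda>x. g x - (\<Sum>m<k. c m * e m x)) \<le> K2 * nrm (\<lambda>x. g x - A g x - (\<Sum>m<k. c m * f m x))"
          by (intro always_eventually allI) (simp add: key[OF g] K2(2)[OF RL[OF g]])
        show "(\<lambda>_. 0::real) \<longlonglongrightarrow> 0" by simp
        show "(\<lambda>k. K2 * nrm (\<lambda>x. g x - A g x - (\<Sum>m<k. c m * f m x))) \<longlonglongrightarrow> 0"
          using tendsto_mult_right_zero[OF c] by simp
      qed
    next
      fix c' assume c': "(\<lambda>k. nrm (\<lambda>x. g x - (\<Sum>m<k. c' m * e m x))) \<longlonglongrightarrow> 0"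
      have "(\<lambda>k. nrm (\<lambda>x. g x - A g x - (\<Sum>m<k. c' m * f m x))) \<longlonglongrightarrow> 0"
      proof (rule tendsto_sandwich[of "\<lambda>_. 0" _ _ "\<lambda>k. K1 * nrm (\<lambda>x. g x - (\<Sum>m<k. c' m * e m x))"])
        show "\<forall>\<^sub>F k in sequentially. 0 \<le> nrm (\<lambda>x. g x - A g x - (\<Sum>m<k. c' m * f m x))"
          by (intro always_eventually allI nrm_nonneg Lp_diff[OF Bg] Lp_sum) (auto intro: Lp_cmult fm)
        show "\<forall>\<^sub>F k in sequentially. nrm (\<lambda>x. g x - A g x - (\<Sum>m<k. c' m * f m x)) \<le> K1 * nrm (\<lambda>x. g x - (\<Sum>m<k. c' m * e m x))"
          by (intro always_eventually allI) (simp add: key[OF g] K1(2)[OF RL[OF g]])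
        show "(\<lambda>_. 0::real) \<longlonglongrightarrow> 0" by simp
        show "(\<lambda>k. K1 * nrm (\<lambda>x. g x - (\<Sum>m<k. c' m * e m x))) \<longlonglongrightarrow> 0"
          using tendsto_mult_right_zero[OF c'] by simp
      qed
      then show "c' = c" by (rule cu)
    qed
  qed
  have ee: "(\<lambda>m. fractal_fun p xs N \<alpha> (f m) (\<lambda>_. 0)) = e" by (simp add: e_def fun_eq_iff)
  show ?thesis
    unfolding schauder_sequence_def schauder_basis_of_def ee
  proof (intro conjI allI ballI)
    show "e m \<in> closed_span p xs N e" for m by (rule part1)
    show "\<exists>!c. (\<lambda>k. nrm (\<lambda>x. g x - (\<Sum>m<k. c m * e m x))) \<longlonglongrightarrow> 0" if "g \<in> closed_span p xs N e" for g
      by (rule part2[OF that])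
  qed
qed

end


theorem proposition6p11:
  fixes p :: ereal and N :: nat and xs :: "nat \<Rightarrow> real"
    and \<alpha> :: "nat \<Rightarrow> real \<Rightarrow> real" and f :: "nat \<Rightarrow> real \<Rightarrow> real"
  assumes "N \<ge> 2"
    and "partition xs N"
    and "1 \<le> p"
    and "\<forall>n\<in>{1..N}. \<alpha> n \<in> borel_measurable (lebI xs N)"
    and "\<forall>n\<in>{1..N}. esssup (lebI xs N) (\<lambda>x. ereal \<bar>\<alpha> n x\<bar>) < 1"
    and "schauder_basis_of p xs N (Lp p xs N) f"
  shows "schauder_sequence p xs N (\<lambda>m. fractal_fun p xs N \<alpha> (f m) (\<lambda>_. 0))"
proof -
  define es where "es n = esssup (lebI xs N) (\<lambda>x. ereal \<bar>\<alpha> n x\<bar>)" for n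
  define S where "S = insert (1/2) ((\<lambda>n. real_of_ereal (es n)) ` {1..N})"
  define \<Lambda> where "\<Lambda> = Max S"
  have Sfin: "finite S" "S \<noteq> {}" by (auto simp: S_def)
  have L1: "1/2 \<le> \<Lambda>" unfolding \<Lambda>_def by (rule Max_ge[OF Sfin(1)]) (simp add: S_def)
  have esl: "es n < 1" if "n \<in> {1..N}" for n using assms(5) that by (simp add: es_def)
  have L2: "\<Lambda> < 1" unfolding \<Lambda>_def
  proof (subst Max_less_iff[OF Sfin])
    show "\<forall>a\<in>S. a < 1"
    proof
      fix a assume "a \<in> S"
      then consider "a = 1/2" | n where "n \<in> {1..N}" "a = real_of_ereal (es n)" by (auto simp: S_def)
      then show "a < 1"
      proof cases
        case 1 then show ?thesis by simp
      next
        case 2 then show ?thesis using esl[OF 2(1)] by (cases "es n") auto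
      qed
    qed
  qed
  have ab: "\<forall>n\<in>{1..N}. AE x in lebI xs N. \<bar>\<alpha> n x\<bar> \<le> \<Lambda>"
  proof
    fix n assume n: "n \<in> {1..N}"
    have le: "real_of_ereal (es n) \<le> \<Lambda>" unfolding \<Lambda>_def
      by (rule Max_ge[OF Sfin(1)]) (use n in \<open>simp add: S_def\<close>)
    have esL: "es n \<le> ereal \<Lambda>"
      using esl[OF n] le L1 by (cases "es n") auto
    show "AE x in lebI xs N. \<bar>\<alpha> n x\<bar> \<le> \<Lambda>"
      using esssup_AE[of "\<lambda>x. ereal \<bar>\<alpha> n x\<bar>" "lebI xs N"]
    proof eventually_elim
      case (elim x)
      have "ereal \<bar>\<alpha> n x\<bar> \<le> ereal \<Lambda>" using order_trans[OF elim esL[unfolded es_def]] .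
      then show ?case by simp
    qed
  qed
  interpret psetting xs N \<alpha> \<Lambda> p
    by unfold_locales (use assms L1 L2 ab in auto)
  show ?thesis by (rule main) (use assms(6) in simp)
qed

end
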